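(* Let $h>0$ and let $B\subset\mathbb Z^8_h$ be bounded. As operators on the space of functions $\partial B\to\mathbb O$, $$(P^h_{\partial B})^2=P^h_{\partial B},\qquad (Q^h_{\partial B})^2=Q^h_{\partial B},\qquad P^h_{\partial B}Q^h_{\partial B}=Q^h_{\partial B}P^h_{\partial B}=0.$$
   Context: $\mathbb O$ is the real octonion algebra with basis $\mathbf e_0=1,\mathbf e_1,\dots,\mathbf e_7$, where $\mathbf e_i\mathbf e_j=-\delta_{ij}+\sum_k\varepsilon_{ijk}\mathbf e_k$ for $1\le i,j\le 7$, $\varepsilon_{ijk}$ totally antisymmetric with $\varepsilon_{ijk}=1$ for $ijk\in\{123,145,176,246,257,347,365\}$; $\overline{\mathbf e}_0=\mathbf e_0$, $\overline{\mathbf e}_l=-\mathbf e_l$ ($l\ge1$). For $h>0$, $\mathbb Z^8_h=(h\mathbb Z)^8$, $e_0,\dots,e_7$ are the standard unit vectors of $\mathbb R^8$, $\chi_A$ is the indicator of $A$. $\partial_l^{+,h}f(x)=(f(x+he_l)-f(x))/h$, $\partial_l^{-,h}f(x)=(f(x)-f(x-he_l))/h$. $N(x)=\{x,x\pm he_0,\dots,x\pm he_7\}$; $\partial B=\{x:\ N(x)\cap B\neq\emptyset,\ N(x)\cap(\mathbb Z^8_h\setminus B)\neq\emptyset\}$. For $x\in\partial B$: $\Sigma(x)=\sum_l[(\partial_l^{+,h}\chi_B(x))^2+(\partial_l^{-,h}\chi_B(x))^2]$, $s(x)=\frac{h^8}{2}\sqrt{\Sigma(x)}$, $n_l^\pm(x)=-2\partial_l^{\pm,h}\chi_B(x)/\sqrt{\Sigma(x)}$,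 $\int_{\partial B}g\,dS=\sum_{x\in\partial B}g(x)s(x)$. Fundamental solution: $E^1(x)=\frac{1}{(2\pi)^8}\int_{[-\pi,\pi]^8}\frac{\sum_l\overline{\mathbf e}_l\sin u_l}{\sum_l\sin^2u_l}\sin(\sum_lu_lx_l)\,du$ ($x\in\mathbb Z^8$), $E^h(x)=h^{-7}E^1(x/h)$. Star product: $K^h(x,y)*g(x)=-\frac12\sum_{l=0}^7\big(E^h(he_l-x+y)n_l^-(x)+E^h(-he_l-x+y)n_l^+(x)\big)(\mathbf e_lg(x))$. For $g:\partial B\to\mathbb O$: $S^h_{\partial B}g(y)=2\int_{\partial B}K^h(x,y)*\big(g(x)-g(y)\big)dS(x)+g(y)$ ($y\in\partial B$), $P^h_{\partial B}g=\frac12(g+S^h_{\partial B}g)$, $Q^h_{\partial B}g=\frac12(g-S^h_{\partial B}g)$. *)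

theory Defs
  imports "HOL-Analysis.Analysis"
begin

text \<open>Octonions and points of R^8 are both modelled as vectors in real^8;
  the component with index (of_nat l :: 8) is the coefficient of e_l, l = 0..7.\<close>

type_synonym octo = "real ^ 8"

definition ev :: "nat \<Rightarrow> real ^ 8" where
  "ev l = axis (of_nat l :: 8) 1"

definition oct_triples :: "(nat \<times> nat \<times> nat) list" where
  "oct_triples = [(1,2,3),(1,4,5),(1,7,6),(2,4,6),(2,5,7),(3,4,7),(3,6,5)]"

definition oeps :: "nat \<Rightarrow> nat \<Rightarrow> nat \<Rightarrow> real" where
  "oeps i j k =
     (if \<exists>(a,b,c)\<in>set oct_triples. (i,j,k) \<in> {(a,b,c),(b,c,a),(c,a,b)} then 1
      else if \<exists>(a,b,c)\<in>set oct_triples. (i,j,k) \<in> {(b,a,c),(a,c,b),(c,b,a)} then -1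
      else 0)"

definition ebprod :: "nat \<Rightarrow> nat \<Rightarrow> octo" where
  "ebprod i j =
     (if i = 0 then ev j
      else if j = 0 then ev i
      else (- (if i = j then 1 else 0)) *\<^sub>R ev 0 + (\<Sum>k\<in>{1..7}. oeps i j k *\<^sub>R ev k))"

definition omult :: "octo \<Rightarrow> octo \<Rightarrow> octo" where
  "omult x y = (\<Sum>i<8. \<Sum>j<8. (x $ of_nat i * y $ of_nat j) *\<^sub>R ebprod i j)"

definition oconj :: "octo \<Rightarrow> octo" where
  "oconj x = (\<Sum>l<8. ((if l = 0 then 1 else -1) * x $ of_nat l) *\<^sub>R ev l)"

definition lattice :: "real \<Rightarrow> (real ^ 8) set" where
  "lattice h = {x. \<forall>i. \<exists>k::int. x $ i = h * of_int k}"

definition chi :: "(real ^ 8) set \<Rightarrow> real ^ 8 \<Rightarrow> real" where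
  "chi B x = indicator B x"

definition dplus :: "real \<Rightarrow> nat \<Rightarrow> (real ^ 8 \<Rightarrow> real) \<Rightarrow> real ^ 8 \<Rightarrow> real" where
  "dplus h l f x = (f (x + h *\<^sub>R ev l) - f x) / h"

definition dminus :: "real \<Rightarrow> nat \<Rightarrow> (real ^ 8 \<Rightarrow> real) \<Rightarrow> real ^ 8 \<Rightarrow> real" where
  "dminus h l f x = (f x - f (x - h *\<^sub>R ev l)) / h"

definition nbhd :: "real \<Rightarrow> real ^ 8 \<Rightarrow> (real ^ 8) set" where
  "nbhd h x = insert x ((\<Union>l<8. {x + h *\<^sub>R ev l, x - h *\<^sub>R ev l}))"

definition dbound :: "real \<Rightarrow> (real ^ 8) set \<Rightarrow> (real ^ 8) set" where
  "dbound h B = {x \<in> lattice h. nbhd h x \<inter> B \<noteq> {} \<and> nbhd h x \<inter> (lattice h - B) \<noteq> {}}"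

definition Sig :: "real \<Rightarrow> (real ^ 8) set \<Rightarrow> real ^ 8 \<Rightarrow> real" where
  "Sig h B x = (\<Sum>l<8. (dplus h l (chi B) x)\<^sup>2 + (dminus h l (chi B) x)\<^sup>2)"

definition sarea :: "real \<Rightarrow> (real ^ 8) set \<Rightarrow> real ^ 8 \<Rightarrow> real" where
  "sarea h B x = h ^ 8 / 2 * sqrt (Sig h B x)"

definition nplus :: "real \<Rightarrow> (real ^ 8) set \<Rightarrow> nat \<Rightarrow> real ^ 8 \<Rightarrow> real" where
  "nplus h B l x = - 2 * dplus h l (chi B) x / sqrt (Sig h B x)"

definition nminus :: "real \<Rightarrow> (real ^ 8) set \<Rightarrow> nat \<Rightarrow> real ^ 8 \<Rightarrow> real" where
  "nminus h B l x = - 2 * dminus h l (chi B) x / sqrt (Sig h B x)"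

definition bint :: "real \<Rightarrow> (real ^ 8) set \<Rightarrow> (real ^ 8 \<Rightarrow> octo) \<Rightarrow> octo" where
  "bint h B g = (\<Sum>x\<in>dbound h B. sarea h B x *\<^sub>R g x)"

definition E1 :: "real ^ 8 \<Rightarrow> octo" where
  "E1 x = (1 / (2 * pi) ^ 8) *\<^sub>R
     integral (cbox (- (\<chi> i. pi)) (\<chi> i. pi))
       (\<lambda>u::real^8. (sin (\<Sum>l<8. u $ of_nat l * x $ of_nat l)
            / (\<Sum>l<8. (sin (u $ of_nat l))\<^sup>2)) *\<^sub>R
          (\<Sum>l<8. sin (u $ of_nat l) *\<^sub>R oconj (ev l)))"

definition Eh :: "real \<Rightarrow> real ^ 8 \<Rightarrow> octo" where
  "Eh h x = (1 / h ^ 7) *\<^sub>R E1 ((1 / h) *\<^sub>R x)"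

definition kstar :: "real \<Rightarrow> (real ^ 8) set \<Rightarrow> real ^ 8 \<Rightarrow> real ^ 8 \<Rightarrow> octo \<Rightarrow> octo" where
  "kstar h B x y v = (- 1 / 2) *\<^sub>R
     (\<Sum>l<8. omult (nminus h B l x *\<^sub>R Eh h (h *\<^sub>R ev l - x + y)
                    + nplus h B l x *\<^sub>R Eh h (- (h *\<^sub>R ev l) - x + y))
                   (omult (ev l) v))"

definition Sop :: "real \<Rightarrow> (real ^ 8) set \<Rightarrow> (real ^ 8 \<Rightarrow> octo) \<Rightarrow> real ^ 8 \<Rightarrow> octo" where
  "Sop h B g y = 2 *\<^sub>R bint h B (\<lambda>x. kstar h B x y (g x - g y)) + g y"

definition Pop :: "real \<Rightarrow> (real ^ 8) set \<Rightarrow> (real ^ 8 \<Rightarrow> octo) \<Rightarrow> real ^ 8 \<Rightarrow> octo" where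
  "Pop h B g y = (1 / 2) *\<^sub>R (g y + Sop h B g y)"

definition Qop :: "real \<Rightarrow> (real ^ 8) set \<Rightarrow> (real ^ 8 \<Rightarrow> octo) \<Rightarrow> real ^ 8 \<Rightarrow> octo" where
  "Qop h B g y = (1 / 2) *\<^sub>R (g y - Sop h B g y)"

end

theory Submission
  imports Defs
begin


lemma of_nat_8_inj: "inj_on (of_nat :: nat \<Rightarrow> 8) {..<8}"
proof (rule inj_onI)
  fix a b assume a: "a \<in> {..<8}" and b: "b \<in> {..<8}" and e: "(of_nat a :: 8) = of_nat b"
  { fix a b :: nat assume "a \<le> b" "b < 8" "(of_nat a :: 8) = of_nat b"
    then have "(of_nat (b - a) :: 8) = 0" by (simp add: of_nat_diff)
    then have "8 dvd (b - a)" by (simp add: of_nat_eq_0_iff_char_dvd)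
    with \<open>a \<le> b\<close> \<open>b < 8\<close> have "a = b" by (auto dest: dvd_imp_le) }
  note * = this
  show "a = b" using a b e *[of a b] *[of b a] by (cases "a \<le> b") auto
qed

lemma of_nat_8_surj: "(UNIV :: 8 set) = of_nat ` {..<8}"
proof -
  have "card (of_nat ` {..<8} :: 8 set) = 8" using of_nat_8_inj by (simp add: card_image)
  moreover have "card (UNIV :: 8 set) = 8" by simp
  ultimately show ?thesis using card_subset_eq[of UNIV "of_nat ` {..<8} :: 8 set"] by simp
qed

lemma of_nat_8_eq: "a < 8 \<Longrightarrow> b < 8 \<Longrightarrow> ((of_nat a :: 8) = of_nat b) = (a = b)"
  using of_nat_8_inj by (auto dest: inj_onD)

lemma sum8: "(\<Sum>l<8. f (of_nat l :: 8)) = (\<Sum>i\<in>UNIV. f i)"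
  by (subst of_nat_8_surj) (simp add: sum.reindex[OF of_nat_8_inj])

lemma ex8: "\<exists>m<8. i = (of_nat m :: 8)"
  using of_nat_8_surj by auto

lemma ev_nth: "a < 8 \<Longrightarrow> l < 8 \<Longrightarrow> ev l $ of_nat a = (if a = l then 1 else 0)"
  by (simp add: ev_def axis_def of_nat_8_eq)

lemma vec_expand: "(c :: real^8) = (\<Sum>m<8. c $ of_nat m *\<^sub>R ev m)"
proof (subst vec_eq_iff, intro allI)
  fix i :: 8
  obtain a where a: "a < 8" "i = of_nat a" using ex8 by blast
  have "(\<Sum>m<8. c $ of_nat m *\<^sub>R ev m) $ i = (\<Sum>m<8. c $ of_nat m * (if a = m then 1 else 0))"
    using a by (simp add: ev_nth)
  also have "\<dots> = c $ i" using a by (simp add: if_distrib[of "\<lambda>x. _ * x"] cong: if_cong)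
  finally show "c $ i = (\<Sum>m<8. c $ of_nat m *\<^sub>R ev m) $ i" by simp
qed

lemma linear_omult_left: "linear (\<lambda>x. omult x z)"
  by (rule linearI) (simp_all add: omult_def algebra_simps scaleR_sum_right sum.distrib)

lemma linear_omult_right: "linear (omult z)"
  by (rule linearI) (simp_all add: omult_def algebra_simps scaleR_sum_right sum.distrib)

lemma omult_add_left: "omult (x + y) z = omult x z + omult y z"
  using linear_add[OF linear_omult_left] by blast
lemma omult_diff_left: "omult (x - y) z = omult x z - omult y z"
  using linear_diff[OF linear_omult_left] by blast
lemma omult_scaleR_left: "omult (c *\<^sub>R x) z = c *\<^sub>R omult x z"
  using linear_scale[OF linear_omult_left] by blast
lemma omult_sum_left: "omult (\<Sum>i\<in>A. f i) z = (\<Sum>i\<in>A. omult (f i) z)"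
  using linear_sum[OF linear_omult_left] by blast
lemma omult_add_right: "omult z (x + y) = omult z x + omult z y"
  using linear_add[OF linear_omult_right] by blast
lemma omult_diff_right: "omult z (x - y) = omult z x - omult z y"
  using linear_diff[OF linear_omult_right] by blast
lemma omult_scaleR_right: "omult z (c *\<^sub>R x) = c *\<^sub>R omult z x"
  using linear_scale[OF linear_omult_right] by blast
lemma omult_sum_right: "omult z (\<Sum>i\<in>A. f i) = (\<Sum>i\<in>A. omult z (f i))"
  using linear_sum[OF linear_omult_right] by blast
lemma omult_zero_right: "omult z 0 = 0"
  using linear_0[OF linear_omult_right] by blast
lemma omult_zero_left: "omult 0 z = 0"
  using linear_0[OF linear_omult_left] by blast

lemma omult_ev: "i < 8 \<Longrightarrow> j < 8 \<Longrightarrow> omult (ev i) (ev j) = ebprod i j"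
  by (simp add: omult_def ev_nth if_distrib[of "\<lambda>x. x * _"] if_distrib[of "\<lambda>x. _ * x"] if_distrib[of "\<lambda>x. x *\<^sub>R _"] cong: if_cong)

lemma oconj_ev: "k < 8 \<Longrightarrow> oconj (ev k) = (if k = 0 then 1 else -1) *\<^sub>R ev k"
  by (simp add: oconj_def ev_nth if_distrib[of "\<lambda>x. _ * x"] if_distrib[of "\<lambda>x. x *\<^sub>R _"] cong: if_cong)

lemma oeps_alt: "oeps i j k =
  (if (i,j,k) \<in> {(1,2,3),(2,3,1),(3,1,2),(1,4,5),(4,5,1),(5,1,4),(1,7,6),(7,6,1),(6,1,7),(2,4,6),(4,6,2),(6,2,4),
     (2,5,7),(5,7,2),(7,2,5),(3,4,7),(4,7,3),(7,3,4),(3,6,5),(6,5,3),(5,3,6)} then 1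
   else if (i,j,k) \<in> {(2,1,3),(1,3,2),(3,2,1),(4,1,5),(1,5,4),(5,4,1),(7,1,6),(1,6,7),(6,7,1),(4,2,6),(2,6,4),(6,4,2),
     (5,2,7),(2,7,5),(7,5,2),(4,3,7),(3,7,4),(7,4,3),(6,3,5),(3,5,6),(5,6,3)} then -1 else 0)"
  unfolding oeps_def oct_triples_def by auto

lemma sum17: "(\<Sum>k\<in>{1..7::nat}. f k) = f 1 + f 2 + f 3 + f 4 + f 5 + f 6 + f 7"
  by (simp add: numeral_eq_Suc atLeastAtMostSuc_conv add_ac)
lemma ebp_0_0: "ebprod 0 0 = ev 0" by (simp add: ebprod_def oeps_alt if_distrib[of "\<lambda>x. x *\<^sub>R _"] cong: if_cong)
lemma ebp_0_1: "ebprod 0 1 = ev 1" by (simp add: ebprod_def oeps_alt if_distrib[of "\<lambda>x. x *\<^sub>R _"] cong: if_cong)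
lemma ebp_0_2: "ebprod 0 2 = ev 2" by (simp add: ebprod_def oeps_alt if_distrib[of "\<lambda>x. x *\<^sub>R _"] cong: if_cong)
lemma ebp_0_3: "ebprod 0 3 = ev 3" by (simp add: ebprod_def oeps_alt if_distrib[of "\<lambda>x. x *\<^sub>R _"] cong: if_cong)
lemma ebp_0_4: "ebprod 0 4 = ev 4" by (simp add: ebprod_def oeps_alt if_distrib[of "\<lambda>x. x *\<^sub>R _"] cong: if_cong)
lemma ebp_0_5: "ebprod 0 5 = ev 5" by (simp add: ebprod_def oeps_alt if_distrib[of "\<lambda>x. x *\<^sub>R _"] cong: if_cong)
lemma ebp_0_6: "ebprod 0 6 = ev 6" by (simp add: ebprod_def oeps_alt if_distrib[of "\<lambda>x. x *\<^sub>R _"] cong: if_cong)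
lemma ebp_0_7: "ebprod 0 7 = ev 7" by (simp add: ebprod_def oeps_alt if_distrib[of "\<lambda>x. x *\<^sub>R _"] cong: if_cong)
lemma ebp_1_0: "ebprod 1 0 = ev 1" by (simp add: ebprod_def oeps_alt if_distrib[of "\<lambda>x. x *\<^sub>R _"] cong: if_cong)
lemma ebp_1_1: "ebprod 1 1 = - ev 0" by (simp add: ebprod_def oeps_alt if_distrib[of "\<lambda>x. x *\<^sub>R _"] cong: if_cong)
lemma ebp_1_2: "ebprod 1 2 = ev 3" by (simp add: ebprod_def oeps_alt if_distrib[of "\<lambda>x. x *\<^sub>R _"] cong: if_cong)
lemma ebp_1_3: "ebprod 1 3 = - ev 2" by (simp add: ebprod_def oeps_alt if_distrib[of "\<lambda>x. x *\<^sub>R _"] cong: if_cong)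
lemma ebp_1_4: "ebprod 1 4 = ev 5" by (simp add: ebprod_def oeps_alt if_distrib[of "\<lambda>x. x *\<^sub>R _"] cong: if_cong)
lemma ebp_1_5: "ebprod 1 5 = - ev 4" by (simp add: ebprod_def oeps_alt if_distrib[of "\<lambda>x. x *\<^sub>R _"] cong: if_cong)
lemma ebp_1_6: "ebprod 1 6 = - ev 7" by (simp add: ebprod_def oeps_alt if_distrib[of "\<lambda>x. x *\<^sub>R _"] cong: if_cong)
lemma ebp_1_7: "ebprod 1 7 = ev 6" by (simp add: ebprod_def oeps_alt if_distrib[of "\<lambda>x. x *\<^sub>R _"] cong: if_cong)
lemma ebp_2_0: "ebprod 2 0 = ev 2" by (simp add: ebprod_def oeps_alt if_distrib[of "\<lambda>x. x *\<^sub>R _"] cong: if_cong)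
lemma ebp_2_1: "ebprod 2 1 = - ev 3" by (simp add: ebprod_def oeps_alt if_distrib[of "\<lambda>x. x *\<^sub>R _"] cong: if_cong)
lemma ebp_2_2: "ebprod 2 2 = - ev 0" by (simp add: ebprod_def oeps_alt if_distrib[of "\<lambda>x. x *\<^sub>R _"] cong: if_cong)
lemma ebp_2_3: "ebprod 2 3 = ev 1" by (simp add: ebprod_def oeps_alt if_distrib[of "\<lambda>x. x *\<^sub>R _"] cong: if_cong)
lemma ebp_2_4: "ebprod 2 4 = ev 6" by (simp add: ebprod_def oeps_alt if_distrib[of "\<lambda>x. x *\<^sub>R _"] cong: if_cong)
lemma ebp_2_5: "ebprod 2 5 = ev 7" by (simp add: ebprod_def oeps_alt if_distrib[of "\<lambda>x. x *\<^sub>R _"] cong: if_cong)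
lemma ebp_2_6: "ebprod 2 6 = - ev 4" by (simp add: ebprod_def oeps_alt if_distrib[of "\<lambda>x. x *\<^sub>R _"] cong: if_cong)
lemma ebp_2_7: "ebprod 2 7 = - ev 5" by (simp add: ebprod_def oeps_alt if_distrib[of "\<lambda>x. x *\<^sub>R _"] cong: if_cong)
lemma ebp_3_0: "ebprod 3 0 = ev 3" by (simp add: ebprod_def oeps_alt if_distrib[of "\<lambda>x. x *\<^sub>R _"] cong: if_cong)
lemma ebp_3_1: "ebprod 3 1 = ev 2" by (simp add: ebprod_def oeps_alt if_distrib[of "\<lambda>x. x *\<^sub>R _"] cong: if_cong)
lemma ebp_3_2: "ebprod 3 2 = - ev 1" by (simp add: ebprod_def oeps_alt if_distrib[of "\<lambda>x. x *\<^sub>R _"] cong: if_cong)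
lemma ebp_3_3: "ebprod 3 3 = - ev 0" by (simp add: ebprod_def oeps_alt if_distrib[of "\<lambda>x. x *\<^sub>R _"] cong: if_cong)
lemma ebp_3_4: "ebprod 3 4 = ev 7" by (simp add: ebprod_def oeps_alt if_distrib[of "\<lambda>x. x *\<^sub>R _"] cong: if_cong)
lemma ebp_3_5: "ebprod 3 5 = - ev 6" by (simp add: ebprod_def oeps_alt if_distrib[of "\<lambda>x. x *\<^sub>R _"] cong: if_cong)
lemma ebp_3_6: "ebprod 3 6 = ev 5" by (simp add: ebprod_def oeps_alt if_distrib[of "\<lambda>x. x *\<^sub>R _"] cong: if_cong)
lemma ebp_3_7: "ebprod 3 7 = - ev 4" by (simp add: ebprod_def oeps_alt if_distrib[of "\<lambda>x. x *\<^sub>R _"] cong: if_cong)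
lemma ebp_4_0: "ebprod 4 0 = ev 4" by (simp add: ebprod_def oeps_alt if_distrib[of "\<lambda>x. x *\<^sub>R _"] cong: if_cong)
lemma ebp_4_1: "ebprod 4 1 = - ev 5" by (simp add: ebprod_def oeps_alt if_distrib[of "\<lambda>x. x *\<^sub>R _"] cong: if_cong)
lemma ebp_4_2: "ebprod 4 2 = - ev 6" by (simp add: ebprod_def oeps_alt if_distrib[of "\<lambda>x. x *\<^sub>R _"] cong: if_cong)
lemma ebp_4_3: "ebprod 4 3 = - ev 7" by (simp add: ebprod_def oeps_alt if_distrib[of "\<lambda>x. x *\<^sub>R _"] cong: if_cong)
lemma ebp_4_4: "ebprod 4 4 = - ev 0" by (simp add: ebprod_def oeps_alt if_distrib[of "\<lambda>x. x *\<^sub>R _"] cong: if_cong)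
lemma ebp_4_5: "ebprod 4 5 = ev 1" by (simp add: ebprod_def oeps_alt if_distrib[of "\<lambda>x. x *\<^sub>R _"] cong: if_cong)
lemma ebp_4_6: "ebprod 4 6 = ev 2" by (simp add: ebprod_def oeps_alt if_distrib[of "\<lambda>x. x *\<^sub>R _"] cong: if_cong)
lemma ebp_4_7: "ebprod 4 7 = ev 3" by (simp add: ebprod_def oeps_alt if_distrib[of "\<lambda>x. x *\<^sub>R _"] cong: if_cong)
lemma ebp_5_0: "ebprod 5 0 = ev 5" by (simp add: ebprod_def oeps_alt if_distrib[of "\<lambda>x. x *\<^sub>R _"] cong: if_cong)
lemma ebp_5_1: "ebprod 5 1 = ev 4" by (simp add: ebprod_def oeps_alt if_distrib[of "\<lambda>x. x *\<^sub>R _"] cong: if_cong)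
lemma ebp_5_2: "ebprod 5 2 = - ev 7" by (simp add: ebprod_def oeps_alt if_distrib[of "\<lambda>x. x *\<^sub>R _"] cong: if_cong)
lemma ebp_5_3: "ebprod 5 3 = ev 6" by (simp add: ebprod_def oeps_alt if_distrib[of "\<lambda>x. x *\<^sub>R _"] cong: if_cong)
lemma ebp_5_4: "ebprod 5 4 = - ev 1" by (simp add: ebprod_def oeps_alt if_distrib[of "\<lambda>x. x *\<^sub>R _"] cong: if_cong)
lemma ebp_5_5: "ebprod 5 5 = - ev 0" by (simp add: ebprod_def oeps_alt if_distrib[of "\<lambda>x. x *\<^sub>R _"] cong: if_cong)
lemma ebp_5_6: "ebprod 5 6 = - ev 3" by (simp add: ebprod_def oeps_alt if_distrib[of "\<lambda>x. x *\<^sub>R _"] cong: if_cong)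
lemma ebp_5_7: "ebprod 5 7 = ev 2" by (simp add: ebprod_def oeps_alt if_distrib[of "\<lambda>x. x *\<^sub>R _"] cong: if_cong)
lemma ebp_6_0: "ebprod 6 0 = ev 6" by (simp add: ebprod_def oeps_alt if_distrib[of "\<lambda>x. x *\<^sub>R _"] cong: if_cong)
lemma ebp_6_1: "ebprod 6 1 = ev 7" by (simp add: ebprod_def oeps_alt if_distrib[of "\<lambda>x. x *\<^sub>R _"] cong: if_cong)
lemma ebp_6_2: "ebprod 6 2 = ev 4" by (simp add: ebprod_def oeps_alt if_distrib[of "\<lambda>x. x *\<^sub>R _"] cong: if_cong)
lemma ebp_6_3: "ebprod 6 3 = - ev 5" by (simp add: ebprod_def oeps_alt if_distrib[of "\<lambda>x. x *\<^sub>R _"] cong: if_cong)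
lemma ebp_6_4: "ebprod 6 4 = - ev 2" by (simp add: ebprod_def oeps_alt if_distrib[of "\<lambda>x. x *\<^sub>R _"] cong: if_cong)
lemma ebp_6_5: "ebprod 6 5 = ev 3" by (simp add: ebprod_def oeps_alt if_distrib[of "\<lambda>x. x *\<^sub>R _"] cong: if_cong)
lemma ebp_6_6: "ebprod 6 6 = - ev 0" by (simp add: ebprod_def oeps_alt if_distrib[of "\<lambda>x. x *\<^sub>R _"] cong: if_cong)
lemma ebp_6_7: "ebprod 6 7 = - ev 1" by (simp add: ebprod_def oeps_alt if_distrib[of "\<lambda>x. x *\<^sub>R _"] cong: if_cong)
lemma ebp_7_0: "ebprod 7 0 = ev 7" by (simp add: ebprod_def oeps_alt if_distrib[of "\<lambda>x. x *\<^sub>R _"] cong: if_cong)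
lemma ebp_7_1: "ebprod 7 1 = - ev 6" by (simp add: ebprod_def oeps_alt if_distrib[of "\<lambda>x. x *\<^sub>R _"] cong: if_cong)
lemma ebp_7_2: "ebprod 7 2 = ev 5" by (simp add: ebprod_def oeps_alt if_distrib[of "\<lambda>x. x *\<^sub>R _"] cong: if_cong)
lemma ebp_7_3: "ebprod 7 3 = ev 4" by (simp add: ebprod_def oeps_alt if_distrib[of "\<lambda>x. x *\<^sub>R _"] cong: if_cong)
lemma ebp_7_4: "ebprod 7 4 = - ev 3" by (simp add: ebprod_def oeps_alt if_distrib[of "\<lambda>x. x *\<^sub>R _"] cong: if_cong)
lemma ebp_7_5: "ebprod 7 5 = - ev 2" by (simp add: ebprod_def oeps_alt if_distrib[of "\<lambda>x. x *\<^sub>R _"] cong: if_cong)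
lemma ebp_7_6: "ebprod 7 6 = ev 1" by (simp add: ebprod_def oeps_alt if_distrib[of "\<lambda>x. x *\<^sub>R _"] cong: if_cong)
lemma ebp_7_7: "ebprod 7 7 = - ev 0" by (simp add: ebprod_def oeps_alt if_distrib[of "\<lambda>x. x *\<^sub>R _"] cong: if_cong)
lemmas ebp_all = ebp_0_0 ebp_0_1 ebp_0_2 ebp_0_3 ebp_0_4 ebp_0_5 ebp_0_6 ebp_0_7
 ebp_1_0 ebp_1_1 ebp_1_2 ebp_1_3 ebp_1_4 ebp_1_5 ebp_1_6 ebp_1_7
 ebp_2_0 ebp_2_1 ebp_2_2 ebp_2_3 ebp_2_4 ebp_2_5 ebp_2_6 ebp_2_7
 ebp_3_0 ebp_3_1 ebp_3_2 ebp_3_3 ebp_3_4 ebp_3_5 ebp_3_6 ebp_3_7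
 ebp_4_0 ebp_4_1 ebp_4_2 ebp_4_3 ebp_4_4 ebp_4_5 ebp_4_6 ebp_4_7
 ebp_5_0 ebp_5_1 ebp_5_2 ebp_5_3 ebp_5_4 ebp_5_5 ebp_5_6 ebp_5_7
 ebp_6_0 ebp_6_1 ebp_6_2 ebp_6_3 ebp_6_4 ebp_6_5 ebp_6_6 ebp_6_7
 ebp_7_0 ebp_7_1 ebp_7_2 ebp_7_3 ebp_7_4 ebp_7_5 ebp_7_6 ebp_7_7


lemmas ebp_all' = ebp_all[unfolded One_nat_def]

lemma lessThan8: "{..<8::nat} = {0,1,2,3,4,5,6,7}"
  by (simp add: lessThan_nat_numeral lessThan_Suc insert_commute)
lemma all8: "(\<forall>i<(8::nat). P i) \<longleftrightarrow> P 0 \<and> P 1 \<and> P 2 \<and> P 3 \<and> P 4 \<and> P 5 \<and> P 6 \<and> P 7"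
  using lessThan8 by (metis (no_types, lifting) insertCI insertE lessThan_iff singletonD)
lemma omult_neg_left: "omult (- x) z = - omult x z"
  using linear_neg[OF linear_omult_left] by blast
lemma omult_neg_right: "omult z (- x) = - omult z x"
  using linear_neg[OF linear_omult_right] by blast
lemma basis_id1: "\<forall>k<8. \<forall>l<8. \<forall>m<8. omult (oconj (ev k)) (omult (ev l) (ev m)) + omult (oconj (ev l)) (omult (ev k) (ev m)) = (if k = l then ev m + ev m else 0)"
  unfolding all8
  by (simp add: omult_ev oconj_ev ebp_all ebp_all' omult_scaleR_left omult_scaleR_right omult_neg_left omult_neg_right)

lemma basis_id2: "\<forall>k<8. \<forall>l<8. \<forall>m<8. omult (ev k) (omult (oconj (ev l)) (ev m)) + omult (ev l) (omult (oconj (ev k)) (ev m)) = (if k = l then ev m + ev m else 0)"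
  unfolding all8
  by (simp add: omult_ev oconj_ev ebp_all ebp_all' omult_scaleR_left omult_scaleR_right omult_neg_left omult_neg_right)

lemma oct_id1:
  assumes "k < 8" "l < 8"
  shows "omult (oconj (ev k)) (omult (ev l) c) + omult (oconj (ev l)) (omult (ev k) c) = (if k = l then 2 else 0) *\<^sub>R c"
proof -
  have "omult (oconj (ev k)) (omult (ev l) c) + omult (oconj (ev l)) (omult (ev k) c)
      = (\<Sum>m<8. c $ of_nat m *\<^sub>R (omult (oconj (ev k)) (omult (ev l) (ev m)) + omult (oconj (ev l)) (omult (ev k) (ev m))))"
    apply (subst (1 2) vec_expand[of c])
    by (simp add: omult_sum_right omult_scaleR_right scaleR_add_right sum.distrib)
  also have "\<dots> = (\<Sum>m<8. c $ of_nat m *\<^sub>R (if k = l then ev m + ev m else 0))"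
    using basis_id1 assms by (intro sum.cong) auto
  also have "\<dots> = (if k = l then 2 else 0) *\<^sub>R c"
  proof (cases "k = l")
    case True
    have "(\<Sum>m<8. c $ of_nat m *\<^sub>R (ev m + ev m)) = (\<Sum>m<8. c $ of_nat m *\<^sub>R ev m) + (\<Sum>m<8. c $ of_nat m *\<^sub>R ev m)"
      by (simp only: scaleR_add_right sum.distrib)
    also have "\<dots> = 2 *\<^sub>R c" using vec_expand[of c, symmetric] by (simp add: scaleR_2)
    finally show ?thesis using True by simp
  qed simp
  finally show ?thesis .
qed

lemma oct_id2:
  assumes "k < 8" "l < 8"
  shows "omult (ev k) (omult (oconj (ev l)) c) + omult (ev l) (omult (oconj (ev k)) c) = (if k = l then 2 else 0) *\<^sub>R c"
proof -
  have "omult (ev k) (omult (oconj (ev l)) c) + omult (ev l) (omult (oconj (ev k)) c)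
      = (\<Sum>m<8. c $ of_nat m *\<^sub>R (omult (ev k) (omult (oconj (ev l)) (ev m)) + omult (ev l) (omult (oconj (ev k)) (ev m))))"
    apply (subst (1 2) vec_expand[of c])
    by (simp add: omult_sum_right omult_scaleR_right scaleR_add_right sum.distrib)
  also have "\<dots> = (\<Sum>m<8. c $ of_nat m *\<^sub>R (if k = l then ev m + ev m else 0))"
    using basis_id2 assms by (intro sum.cong) auto
  also have "\<dots> = (if k = l then 2 else 0) *\<^sub>R c"
  proof (cases "k = l")
    case True
    have "(\<Sum>m<8. c $ of_nat m *\<^sub>R (ev m + ev m)) = (\<Sum>m<8. c $ of_nat m *\<^sub>R ev m) + (\<Sum>m<8. c $ of_nat m *\<^sub>R ev m)"
      by (simp only: scaleR_add_right sum.distrib)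
    also have "\<dots> = 2 *\<^sub>R c" using vec_expand[of c, symmetric] by (simp add: scaleR_2)
    finally show ?thesis using True by simp
  qed simp
  finally show ?thesis .
qed



lemma ev_comp: "ev l $ i = (if i = of_nat l then 1 else 0)"
  by (simp add: ev_def axis_def)

lemma lat_add: "x \<in> lattice h \<Longrightarrow> y \<in> lattice h \<Longrightarrow> x + y \<in> lattice h"
  unfolding lattice_def
proof (clarsimp)
  fix i assume "\<forall>i. \<exists>k::int. x $ i = h * of_int k" "\<forall>i. \<exists>k::int. y $ i = h * of_int k"
  then obtain k1 k2 :: int where "x $ i = h * k1" "y $ i = h * k2" by blast
  then show "\<exists>k::int. x $ i + y $ i = h * of_int k" by (intro exI[of _ "k1 + k2"]) (simp add: algebra_simps)
qed

lemma lat_neg: "x \<in> lattice h \<Longrightarrow> - x \<in> lattice h"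
  unfolding lattice_def
proof (clarsimp)
  fix i assume "\<forall>i. \<exists>k::int. x $ i = h * of_int k"
  then obtain k1 :: int where "x $ i = h * k1" by blast
  then show "\<exists>k::int. - x $ i = h * of_int k" by (intro exI[of _ "- k1"]) (simp add: algebra_simps)
qed

lemma lat_diff: "x \<in> lattice h \<Longrightarrow> y \<in> lattice h \<Longrightarrow> x - y \<in> lattice h"
  using lat_add[OF _ lat_neg] by (metis diff_conv_add_uminus)

lemma lat_hev: "h *\<^sub>R ev l \<in> lattice h"
  unfolding lattice_def mem_Collect_eq
proof
  fix i show "\<exists>k::int. (h *\<^sub>R ev l) $ i = h * of_int k"
    by (rule exI[of _ "if i = of_nat l then 1 else 0"]) (simp add: ev_comp)
qed

lemma lat_zero: "0 \<in> lattice h"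
  unfolding lattice_def by (auto intro: exI[of _ 0])

lemma lat_plus_ev: "x \<in> lattice h \<Longrightarrow> x + h *\<^sub>R ev l \<in> lattice h"
  by (rule lat_add[OF _ lat_hev])
lemma lat_minus_ev: "x \<in> lattice h \<Longrightarrow> x - h *\<^sub>R ev l \<in> lattice h"
  by (rule lat_diff[OF _ lat_hev])

lemma lattice_finite:
  assumes h: "h > 0" and B: "B \<subseteq> lattice h" and bd: "bounded B"
  shows "finite B"
proof -
  obtain M where M: "\<And>x. x \<in> B \<Longrightarrow> norm x \<le> M" using bd by (auto simp: bounded_iff)
  define f where "f x = (\<lambda>i. \<lfloor>x $ i / h\<rfloor>)" for x :: "real^8"
  have fx: "x $ i = h * of_int (f x i)" if "x \<in> B" for x i
  proof -
    have "x \<in> lattice h" using B that by blast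
    then obtain k :: int where k: "x $ i = h * k" unfolding lattice_def by blast
    then show ?thesis using h by (simp add: f_def)
  qed
  have inj: "inj_on f B"
  proof (rule inj_onI)
    fix x y assume "x \<in> B" "y \<in> B" "f x = f y"
    then show "x = y" using fx by (metis vec_eq_iff)
  qed
  define N where "N = \<lceil>M / h\<rceil>"
  have "f ` B \<subseteq> PiE UNIV (\<lambda>_. {-N..N})"
  proof
    fix z assume "z \<in> f ` B"
    then obtain x where x: "x \<in> B" "z = f x" by blast
    have "\<bar>f x i\<bar> \<le> N" for i
    proof -
      have "\<bar>x $ i\<bar> \<le> M" using M[OF x(1)] component_le_norm_cart[of x i] by simp
      then have "\<bar>h * of_int (f x i)\<bar> \<le> M" using fx[OF x(1)] by simp
      then have "real_of_int \<bar>f x i\<bar> \<le> M / h" using h by (simp add: abs_mult field_simps)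
      then show ?thesis unfolding N_def by linarith
    qed
    then have "- N \<le> f x i \<and> f x i \<le> N" for i by (metis abs_le_iff minus_le_iff)
    then show "z \<in> PiE UNIV (\<lambda>_. {-N..N})" using x by auto
  qed
  moreover have "finite (PiE (UNIV :: 8 set) (\<lambda>_. {-N..N}))" by (rule finite_PiE) auto
  ultimately have "finite (f ` B)" by (rule finite_subset)
  then show ?thesis using inj by (rule finite_imageD)
qed

lemma dbound_sub: "dbound h B \<subseteq> B \<union> (\<Union>l<8. (\<lambda>b. b - h *\<^sub>R ev l) ` B \<union> (\<lambda>b. b + h *\<^sub>R ev l) ` B)"
proof
  fix x assume "x \<in> dbound h B"
  then obtain y where y: "y \<in> nbhd h x" "y \<in> B" unfolding dbound_def by blast
  from y(1) have "y = x \<or> (\<exists>l<8. y = x + h *\<^sub>R ev l \<or> y = x - h *\<^sub>R ev l)"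
    unfolding nbhd_def by auto
  then show "x \<in> B \<union> (\<Union>l<8. (\<lambda>b. b - h *\<^sub>R ev l) ` B \<union> (\<lambda>b. b + h *\<^sub>R ev l) ` B)"
  proof
    assume "y = x" then show ?thesis using y by auto
  next
    assume "\<exists>l<8. y = x + h *\<^sub>R ev l \<or> y = x - h *\<^sub>R ev l"
    then obtain l where l: "l < 8" and dj: "y = x + h *\<^sub>R ev l \<or> y = x - h *\<^sub>R ev l" by blast
    from dj show ?thesis
    proof
      assume "y = x + h *\<^sub>R ev l"
      then have "x = y - h *\<^sub>R ev l" by simp
      then show ?thesis using y l by blast
    next
      assume "y = x - h *\<^sub>R ev l"
      then have "x = y + h *\<^sub>R ev l" by simp
      then show ?thesis using y l by blast
    qed
  qed
qed

lemma dbound_finite: "finite B \<Longrightarrow> finite (dbound h B)"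
  by (rule finite_subset[OF dbound_sub]) auto

lemma dbound_lat: "dbound h B \<subseteq> lattice h"
  unfolding dbound_def by auto

definition cmi :: "real \<Rightarrow> (real^8) set \<Rightarrow> nat \<Rightarrow> real^8 \<Rightarrow> real" where
  "cmi h B l x = chi B x - chi B (x - h *\<^sub>R ev l)"
definition cpi :: "real \<Rightarrow> (real^8) set \<Rightarrow> nat \<Rightarrow> real^8 \<Rightarrow> real" where
  "cpi h B l x = chi B (x + h *\<^sub>R ev l) - chi B x"

lemma cmi_supp:
  assumes "B \<subseteq> lattice h" "l < 8" "cmi h B l x \<noteq> 0"
  shows "x \<in> dbound h B"
proof -
  have d: "(x \<in> B) \<noteq> (x - h *\<^sub>R ev l \<in> B)" using assms(3) by (auto simp: cmi_def chi_def indicator_def split: if_splits)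
  then have xl: "x \<in> lattice h" using assms(1) lat_plus_ev[of "x - h *\<^sub>R ev l" h l] by auto
  have "x - h *\<^sub>R ev l \<in> lattice h" using lat_minus_ev[OF xl] .
  moreover have "x \<in> nbhd h x" "x - h *\<^sub>R ev l \<in> nbhd h x" using assms(2) by (auto simp: nbhd_def)
  ultimately show ?thesis using d xl unfolding dbound_def by blast
qed

lemma cpi_supp:
  assumes "B \<subseteq> lattice h" "l < 8" "cpi h B l x \<noteq> 0"
  shows "x \<in> dbound h B"
proof -
  have d: "(x \<in> B) \<noteq> (x + h *\<^sub>R ev l \<in> B)" using assms(3) by (auto simp: cpi_def chi_def indicator_def split: if_splits)
  then have xl: "x \<in> lattice h" using assms(1) lat_minus_ev[of "x + h *\<^sub>R ev l" h l] by auto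
  have "x + h *\<^sub>R ev l \<in> lattice h" using lat_plus_ev[OF xl] .
  moreover have "x \<in> nbhd h x" "x + h *\<^sub>R ev l \<in> nbhd h x" using assms(2) by (auto simp: nbhd_def)
  ultimately show ?thesis using d xl unfolding dbound_def by blast
qed


lemma sum_indic_shift:
  fixes \<Phi> :: "real^8 \<Rightarrow> octo" and a :: "real^8"
  assumes "finite U" "(\<lambda>b. b + a) ` B \<subseteq> U"
  shows "(\<Sum>x\<in>U. indicator B (x - a) *\<^sub>R \<Phi> x) = (\<Sum>b\<in>B. \<Phi> (b + a))"
proof -
  have "(\<Sum>x\<in>U. indicator B (x - a) *\<^sub>R \<Phi> x) = (\<Sum>x\<in>U. if x \<in> (\<lambda>b. b + a) ` B then \<Phi> x else 0)"
  proof (rule sum.cong)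
    fix x
    have iff: "x - a \<in> B \<longleftrightarrow> x \<in> (\<lambda>b. b + a) ` B"
    proof
      assume "x - a \<in> B" then show "x \<in> (\<lambda>b. b + a) ` B" by (rule image_eqI[rotated]) simp
    next
      assume "x \<in> (\<lambda>b. b + a) ` B" then obtain b where "b \<in> B" "x = b + a" by auto
      then show "x - a \<in> B" by simp
    qed
    show "indicator B (x - a) *\<^sub>R \<Phi> x = (if x \<in> (\<lambda>b. b + a) ` B then \<Phi> x else 0)"
      by (simp add: indicator_def iff)
  qed simp
  also have "\<dots> = sum \<Phi> (U \<inter> (\<lambda>b. b + a) ` B)"
    using sum.inter_restrict[OF assms(1), of \<Phi> "(\<lambda>b. b + a) ` B"] by simp
  also have "U \<inter> (\<lambda>b. b + a) ` B = (\<lambda>b. b + a) ` B" using assms(2) by auto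
  also have "sum \<Phi> ((\<lambda>b. b + a) ` B) = (\<Sum>b\<in>B. \<Phi> (b + a))"
    by (subst sum.reindex) (auto simp: inj_on_def)
  finally show ?thesis .
qed

definition Ubig :: "real \<Rightarrow> (real^8) set \<Rightarrow> (real^8) set" where
  "Ubig h B = dbound h B \<union> B \<union> (\<Union>l<8. (\<lambda>b. b + h *\<^sub>R ev l) ` B \<union> (\<lambda>b. b + (- (h *\<^sub>R ev l))) ` B)"

lemma Ubig_finite: "finite B \<Longrightarrow> finite (Ubig h B)"
  unfolding Ubig_def using dbound_finite by auto

lemma sum_cm:
  fixes \<Phi> :: "real^8 \<Rightarrow> octo"
  assumes B: "B \<subseteq> lattice h" "finite B" and l: "l < 8"
  shows "(\<Sum>x\<in>dbound h B. cmi h B l x *\<^sub>R \<Phi> x) = (\<Sum>b\<in>B. \<Phi> b - \<Phi> (b + h *\<^sub>R ev l))"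
proof -
  have fU: "finite (Ubig h B)" using Ubig_finite B by blast
  have "(\<Sum>x\<in>dbound h B. cmi h B l x *\<^sub>R \<Phi> x) = (\<Sum>x\<in>Ubig h B. cmi h B l x *\<^sub>R \<Phi> x)"
  proof (rule sum.mono_neutral_left[OF fU])
    show "dbound h B \<subseteq> Ubig h B" by (auto simp: Ubig_def)
    show "\<forall>i\<in>Ubig h B - dbound h B. cmi h B l i *\<^sub>R \<Phi> i = 0"
    proof
      fix i assume "i \<in> Ubig h B - dbound h B"
      then have "cmi h B l i = 0" using cmi_supp[OF B(1) l] by blast
      then show "cmi h B l i *\<^sub>R \<Phi> i = 0" by simp
    qed
  qed
  also have "\<dots> = (\<Sum>x\<in>Ubig h B. indicator B (x - 0) *\<^sub>R \<Phi> x) - (\<Sum>x\<in>Ubig h B. indicator B (x - h *\<^sub>R ev l) *\<^sub>R \<Phi> x)"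
    by (simp add: cmi_def chi_def scaleR_diff_left sum_subtractf)
  also have "(\<Sum>x\<in>Ubig h B. indicator B (x - 0) *\<^sub>R \<Phi> x) = (\<Sum>b\<in>B. \<Phi> (b + 0))"
    by (rule sum_indic_shift[OF fU]) (auto simp: Ubig_def)
  also have "(\<Sum>x\<in>Ubig h B. indicator B (x - h *\<^sub>R ev l) *\<^sub>R \<Phi> x) = (\<Sum>b\<in>B. \<Phi> (b + h *\<^sub>R ev l))"
    by (rule sum_indic_shift[OF fU]) (use l in \<open>auto simp: Ubig_def\<close>)
  finally show ?thesis by (simp add: sum_subtractf)
qed

lemma sum_cp:
  fixes \<Phi> :: "real^8 \<Rightarrow> octo"
  assumes B: "B \<subseteq> lattice h" "finite B" and l: "l < 8"
  shows "(\<Sum>x\<in>dbound h B. cpi h B l x *\<^sub>R \<Phi> x) = (\<Sum>b\<in>B. \<Phi> (b - h *\<^sub>R ev l) - \<Phi> b)"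
proof -
  have fU: "finite (Ubig h B)" using Ubig_finite B by blast
  have "(\<Sum>x\<in>dbound h B. cpi h B l x *\<^sub>R \<Phi> x) = (\<Sum>x\<in>Ubig h B. cpi h B l x *\<^sub>R \<Phi> x)"
  proof (rule sum.mono_neutral_left[OF fU])
    show "dbound h B \<subseteq> Ubig h B" by (auto simp: Ubig_def)
    show "\<forall>i\<in>Ubig h B - dbound h B. cpi h B l i *\<^sub>R \<Phi> i = 0"
    proof
      fix i assume "i \<in> Ubig h B - dbound h B"
      then have "cpi h B l i = 0" using cpi_supp[OF B(1) l] by blast
      then show "cpi h B l i *\<^sub>R \<Phi> i = 0" by simp
    qed
  qed
  also have "\<dots> = (\<Sum>x\<in>Ubig h B. indicator B (x - (- (h *\<^sub>R ev l))) *\<^sub>R \<Phi> x) - (\<Sum>x\<in>Ubig h B. indicator B (x - 0) *\<^sub>R \<Phi> x)"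
    by (simp add: cpi_def chi_def scaleR_diff_left sum_subtractf)
  also have "(\<Sum>x\<in>Ubig h B. indicator B (x - 0) *\<^sub>R \<Phi> x) = (\<Sum>b\<in>B. \<Phi> (b + 0))"
    by (rule sum_indic_shift[OF fU]) (auto simp: Ubig_def)
  also have "(\<Sum>x\<in>Ubig h B. indicator B (x - (- (h *\<^sub>R ev l))) *\<^sub>R \<Phi> x) = (\<Sum>b\<in>B. \<Phi> (b + (- (h *\<^sub>R ev l))))"
    by (rule sum_indic_shift[OF fU]) (use l in \<open>auto simp: Ubig_def\<close>)
  finally show ?thesis by (simp add: sum_subtractf)
qed

definition Kt :: "real \<Rightarrow> (real^8) set \<Rightarrow> real^8 \<Rightarrow> real^8 \<Rightarrow> octo \<Rightarrow> octo" where
  "Kt h B x y v = h ^ 7 *\<^sub>R (\<Sum>l<8. cmi h B l x *\<^sub>R omult (Eh h (h *\<^sub>R ev l - x + y)) (omult (ev l) v)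
                                  + cpi h B l x *\<^sub>R omult (Eh h (- (h *\<^sub>R ev l) - x + y)) (omult (ev l) v))"

definition Aop :: "real \<Rightarrow> (real^8) set \<Rightarrow> (real^8 \<Rightarrow> octo) \<Rightarrow> real^8 \<Rightarrow> octo" where
  "Aop h B F y = (\<Sum>x\<in>dbound h B. Kt h B x y (F x))"

definition Dop :: "real \<Rightarrow> (real^8 \<Rightarrow> octo) \<Rightarrow> real^8 \<Rightarrow> octo" where
  "Dop h F b = (\<Sum>l<8. omult (ev l) (F (b + h *\<^sub>R ev l) - F (b - h *\<^sub>R ev l)))"

lemma Kt_diff: "Kt h B x y (a - b) = Kt h B x y a - Kt h B x y b"
  by (simp add: Kt_def omult_diff_right scaleR_diff_right sum_subtractf algebra_simps)
lemma Kt_add: "Kt h B x y (a + b) = Kt h B x y a + Kt h B x y b"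
  by (simp add: Kt_def omult_add_right scaleR_add_right sum.distrib algebra_simps)
lemma Kt_scaleR: "Kt h B x y (c *\<^sub>R a) = c *\<^sub>R Kt h B x y a"
  by (simp add: Kt_def omult_scaleR_right scaleR_sum_right algebra_simps)

lemma Aop_add: "Aop h B (\<lambda>x. F x + G x) y = Aop h B F y + Aop h B G y"
  by (simp add: Aop_def Kt_add sum.distrib)
lemma Aop_diff: "Aop h B (\<lambda>x. F x - G x) y = Aop h B F y - Aop h B G y"
  by (simp add: Aop_def Kt_diff sum_subtractf)
lemma Aop_scaleR: "Aop h B (\<lambda>x. c *\<^sub>R F x) y = c *\<^sub>R Aop h B F y"
  by (simp add: Aop_def Kt_scaleR scaleR_sum_right)
lemma Aop_cong: "(\<And>x. x \<in> dbound h B \<Longrightarrow> F x = G x) \<Longrightarrow> Aop h B F y = Aop h B G y"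
  by (simp add: Aop_def)

lemma Sig_zero:
  assumes "h > 0" "Sig h B x = 0" "l < 8"
  shows "cmi h B l x = 0" "cpi h B l x = 0"
proof -
  have "\<forall>l\<in>{..<8}. (dplus h l (chi B) x)\<^sup>2 + (dminus h l (chi B) x)\<^sup>2 = 0"
    using assms(2) unfolding Sig_def by (subst sum_nonneg_eq_0_iff[symmetric]) auto
  then have "dplus h l (chi B) x = 0" "dminus h l (chi B) x = 0" using assms(3)
    by (auto simp: add_nonneg_eq_0_iff)
  then show "cmi h B l x = 0" "cpi h B l x = 0" using assms(1)
    by (auto simp: dplus_def dminus_def cmi_def cpi_def)
qed

lemma W_eq:
  assumes h: "h > 0"
  shows "2 *\<^sub>R (sarea h B x *\<^sub>R kstar h B x y v) = Kt h B x y v"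
proof (cases "Sig h B x = 0")
  case True
  then show ?thesis using Sig_zero[OF h True] by (simp add: sarea_def Kt_def)
next
  case False
  have Sp: "Sig h B x \<ge> 0" unfolding Sig_def by (intro sum_nonneg) auto
  define s where "s = sqrt (Sig h B x)"
  have s: "s > 0" using False Sp by (simp add: s_def)
  have h8: "h ^ 8 = h * h ^ 7" by (subst power_Suc[symmetric]) simp
  define C where "C = 2 * sarea h B x * (- 1 / 2)"
  have c1: "C * nminus h B l x = h ^ 7 * cmi h B l x" for l
    using s h by (simp add: C_def sarea_def nminus_def dminus_def cmi_def chi_def s_def[symmetric] h8 field_simps)
  have c2: "C * nplus h B l x = h ^ 7 * cpi h B l x" for l
    using s h by (simp add: C_def sarea_def nplus_def dplus_def cpi_def chi_def s_def[symmetric] h8 field_simps)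
  have "2 *\<^sub>R (sarea h B x *\<^sub>R kstar h B x y v) = C *\<^sub>R (\<Sum>l<8. omult (nminus h B l x *\<^sub>R Eh h (h *\<^sub>R ev l - x + y)
                    + nplus h B l x *\<^sub>R Eh h (- (h *\<^sub>R ev l) - x + y)) (omult (ev l) v))"
    by (simp add: C_def kstar_def)
  also have "\<dots> = (\<Sum>l<8. (C * nminus h B l x) *\<^sub>R omult (Eh h (h *\<^sub>R ev l - x + y)) (omult (ev l) v)
            + (C * nplus h B l x) *\<^sub>R omult (Eh h (- (h *\<^sub>R ev l) - x + y)) (omult (ev l) v))"
    by (simp add: scaleR_sum_right omult_add_left omult_scaleR_left scaleR_add_right)
  also have "\<dots> = Kt h B x y v"
    by (simp add: c1 c2 Kt_def scaleR_sum_right scaleR_add_right)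
  finally show ?thesis .
qed

lemma Sop_A:
  assumes "h > 0"
  shows "Sop h B g y = Aop h B g y - Aop h B (\<lambda>_. g y) y + g y"
proof -
  have "Sop h B g y = (\<Sum>x\<in>dbound h B. 2 *\<^sub>R (sarea h B x *\<^sub>R kstar h B x y (g x - g y))) + g y"
    by (simp add: Sop_def bint_def scaleR_sum_right)
  also have "\<dots> = (\<Sum>x\<in>dbound h B. Kt h B x y (g x) - Kt h B x y (g y)) + g y"
    using W_eq[OF assms] by (simp add: Kt_diff)
  finally show ?thesis by (simp add: Aop_def sum_subtractf)
qed


definition relR :: "real \<Rightarrow> bool" where
  "relR h \<longleftrightarrow> (\<forall>z\<in>lattice h. \<forall>c. (\<Sum>l<8. omult (Eh h (z + h *\<^sub>R ev l) - Eh h (z - h *\<^sub>R ev l)) (omult (ev l) c))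
                 = (if z = 0 then 2 / h ^ 7 else 0) *\<^sub>R c)"
definition relL :: "real \<Rightarrow> bool" where
  "relL h \<longleftrightarrow> (\<forall>z\<in>lattice h. \<forall>d. (\<Sum>k<8. omult (ev k) (omult (Eh h (z + h *\<^sub>R ev k) - Eh h (z - h *\<^sub>R ev k)) d))
                 = (if z = 0 then 2 / h ^ 7 else 0) *\<^sub>R d)"

lemma BP:
  assumes h: "h > 0" and B: "B \<subseteq> lattice h" "finite B" and y: "y \<in> lattice h" and R: "relR h"
  shows "Aop h B F y = (if y \<in> B then 2 else 0) *\<^sub>R F y - h ^ 7 *\<^sub>R (\<Sum>b\<in>B. omult (Eh h (y - b)) (Dop h F b))"
proof -
  define P1 where "P1 l x = omult (Eh h (h *\<^sub>R ev l - x + y)) (omult (ev l) (F x))" for l x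
  define P2 where "P2 l x = omult (Eh h (- (h *\<^sub>R ev l) - x + y)) (omult (ev l) (F x))" for l x
  define T1 where "T1 l b = omult (Eh h ((y - b) + h *\<^sub>R ev l) - Eh h ((y - b) - h *\<^sub>R ev l)) (omult (ev l) (F b))" for l b
  define T2 where "T2 l b = omult (Eh h (y - b)) (omult (ev l) (F (b + h *\<^sub>R ev l) - F (b - h *\<^sub>R ev l)))" for l b
  have pt: "P1 l b - P1 l (b + h *\<^sub>R ev l) + (P2 l (b - h *\<^sub>R ev l) - P2 l b) = T1 l b - T2 l b" for l b
  proof -
    have e1: "h *\<^sub>R ev l - b + y = (y - b) + h *\<^sub>R ev l" by (simp add: algebra_simps)
    have e2: "h *\<^sub>R ev l - (b + h *\<^sub>R ev l) + y = y - b" by (simp add: algebra_simps)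
    have e3: "- (h *\<^sub>R ev l) - (b - h *\<^sub>R ev l) + y = y - b" by (simp add: algebra_simps)
    have e4: "- (h *\<^sub>R ev l) - b + y = (y - b) - h *\<^sub>R ev l" by (simp add: algebra_simps)
    show ?thesis unfolding P1_def P2_def T1_def T2_def e1 e2 e3 e4
      by (simp add: omult_diff_left omult_diff_right algebra_simps)
  qed
  have "Aop h B F y = h ^ 7 *\<^sub>R (\<Sum>x\<in>dbound h B. \<Sum>l<8. cmi h B l x *\<^sub>R P1 l x + cpi h B l x *\<^sub>R P2 l x)"
    by (simp add: Aop_def Kt_def P1_def P2_def scaleR_sum_right)
  also have "\<dots> = h ^ 7 *\<^sub>R (\<Sum>l<8. \<Sum>x\<in>dbound h B. cmi h B l x *\<^sub>R P1 l x + cpi h B l x *\<^sub>R P2 l x)"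
    by (subst sum.swap) (rule refl)
  also have "\<dots> = h ^ 7 *\<^sub>R (\<Sum>l<8. (\<Sum>x\<in>dbound h B. cmi h B l x *\<^sub>R P1 l x) + (\<Sum>x\<in>dbound h B. cpi h B l x *\<^sub>R P2 l x))"
    by (simp add: sum.distrib)
  also have "\<dots> = h ^ 7 *\<^sub>R (\<Sum>l<8. (\<Sum>b\<in>B. P1 l b - P1 l (b + h *\<^sub>R ev l)) + (\<Sum>b\<in>B. P2 l (b - h *\<^sub>R ev l) - P2 l b))"
    by (intro arg_cong[where f="\<lambda>s. h ^ 7 *\<^sub>R s"] sum.cong refl) (simp add: sum_cm[OF B] sum_cp[OF B])
  also have "\<dots> = h ^ 7 *\<^sub>R (\<Sum>l<8. \<Sum>b\<in>B. T1 l b - T2 l b)"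
    by (simp add: sum.distrib[symmetric] pt)
  also have "\<dots> = h ^ 7 *\<^sub>R (\<Sum>b\<in>B. (\<Sum>l<8. T1 l b) - (\<Sum>l<8. T2 l b))"
    by (subst sum.swap) (simp add: sum_subtractf)
  also have "\<dots> = h ^ 7 *\<^sub>R (\<Sum>b\<in>B. (if y - b = 0 then 2 / h ^ 7 else 0) *\<^sub>R F b - omult (Eh h (y - b)) (Dop h F b))"
  proof -
    have "(\<Sum>l<8. T1 l b) = (if y - b = 0 then 2 / h ^ 7 else 0) *\<^sub>R F b" if "b \<in> B" for b
    proof -
      have "y - b \<in> lattice h" using lat_diff[OF y] B(1) that by blast
      then show ?thesis using R unfolding relR_def T1_def by blast
    qed
    moreover have "(\<Sum>l<8. T2 l b) = omult (Eh h (y - b)) (Dop h F b)" for b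
      by (simp add: T2_def Dop_def omult_sum_right)
    ultimately show ?thesis by (intro arg_cong[where f="\<lambda>s. h ^ 7 *\<^sub>R s"] sum.cong refl) simp
  qed
  also have "\<dots> = h ^ 7 *\<^sub>R ((\<Sum>b\<in>B. (if b = y then (2 / h ^ 7) *\<^sub>R F y else 0)) - (\<Sum>b\<in>B. omult (Eh h (y - b)) (Dop h F b)))"
  proof -
    have eqs: "\<And>b. (if y - b = 0 then 2 / h ^ 7 else 0) *\<^sub>R F b = (if b = y then (2 / h ^ 7) *\<^sub>R F y else 0)"
      by auto
    show ?thesis by (simp only: eqs sum_subtractf)
  qed
  also have "\<dots> = (if y \<in> B then 2 else 0) *\<^sub>R F y - h ^ 7 *\<^sub>R (\<Sum>b\<in>B. omult (Eh h (y - b)) (Dop h F b))"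
    using B(2) h by (simp add: scaleR_diff_right sum.delta')
  finally show ?thesis .
qed

lemma Aop_const:
  assumes h: "h > 0" and B: "B \<subseteq> lattice h" "finite B" and y: "y \<in> lattice h" and R: "relR h"
  shows "Aop h B (\<lambda>_. c) y = (if y \<in> B then 2 else 0) *\<^sub>R c"
  using BP[OF assms, of "\<lambda>_. c"] by (simp add: Dop_def omult_zero_right)


lemma Dker:
  assumes h: "h > 0" and x: "x \<in> lattice h" and b: "b \<in> lattice h" and L: "relL h"
  shows "(\<Sum>k<8. omult (ev k) (Kt h B x (b + h *\<^sub>R ev k) V - Kt h B x (b - h *\<^sub>R ev k) V))
       = 2 *\<^sub>R (\<Sum>l<8. (if x = b + h *\<^sub>R ev l then cmi h B l x else 0) *\<^sub>R omult (ev l) V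
                      + (if x = b - h *\<^sub>R ev l then cpi h B l x else 0) *\<^sub>R omult (ev l) V)"
proof -
  define z1 where "z1 l = h *\<^sub>R ev l - x + b" for l
  define z2 where "z2 l = - (h *\<^sub>R ev l) - x + b" for l
  define W where "W l = omult (ev l) V" for l
  define X where "X k l = cmi h B l x *\<^sub>R omult (Eh h (z1 l + h *\<^sub>R ev k) - Eh h (z1 l - h *\<^sub>R ev k)) (W l)" for k l
  define Y where "Y k l = cpi h B l x *\<^sub>R omult (Eh h (z2 l + h *\<^sub>R ev k) - Eh h (z2 l - h *\<^sub>R ev k)) (W l)" for k l
  have A: "Kt h B x (b + h *\<^sub>R ev k) V - Kt h B x (b - h *\<^sub>R ev k) V = h ^ 7 *\<^sub>R (\<Sum>l<8. X k l + Y k l)" for k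
  proof -
    have "Kt h B x (b + h *\<^sub>R ev k) V - Kt h B x (b - h *\<^sub>R ev k) V
       = h ^ 7 *\<^sub>R (\<Sum>l<8. (cmi h B l x *\<^sub>R omult (Eh h (h *\<^sub>R ev l - x + (b + h *\<^sub>R ev k))) (omult (ev l) V)
                                  + cpi h B l x *\<^sub>R omult (Eh h (- (h *\<^sub>R ev l) - x + (b + h *\<^sub>R ev k))) (omult (ev l) V))
           - (cmi h B l x *\<^sub>R omult (Eh h (h *\<^sub>R ev l - x + (b - h *\<^sub>R ev k))) (omult (ev l) V)
                                  + cpi h B l x *\<^sub>R omult (Eh h (- (h *\<^sub>R ev l) - x + (b - h *\<^sub>R ev k))) (omult (ev l) V)))"
      unfolding Kt_def by (simp only: scaleR_diff_right[symmetric] sum_subtractf[symmetric])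
    also have "\<dots> = h ^ 7 *\<^sub>R (\<Sum>l<8. X k l + Y k l)"
    proof (intro arg_cong[where f="\<lambda>s. h ^ 7 *\<^sub>R s"] sum.cong refl)
      fix l
      have e1: "h *\<^sub>R ev l - x + (b + h *\<^sub>R ev k) = z1 l + h *\<^sub>R ev k"
       and e2: "h *\<^sub>R ev l - x + (b - h *\<^sub>R ev k) = z1 l - h *\<^sub>R ev k"
       and e3: "- (h *\<^sub>R ev l) - x + (b + h *\<^sub>R ev k) = z2 l + h *\<^sub>R ev k"
       and e4: "- (h *\<^sub>R ev l) - x + (b - h *\<^sub>R ev k) = z2 l - h *\<^sub>R ev k"
        by (simp_all add: z1_def z2_def algebra_simps)
      show "cmi h B l x *\<^sub>R omult (Eh h (h *\<^sub>R ev l - x + (b + h *\<^sub>R ev k))) (omult (ev l) V)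
                                  + cpi h B l x *\<^sub>R omult (Eh h (- (h *\<^sub>R ev l) - x + (b + h *\<^sub>R ev k))) (omult (ev l) V)
           - (cmi h B l x *\<^sub>R omult (Eh h (h *\<^sub>R ev l - x + (b - h *\<^sub>R ev k))) (omult (ev l) V)
                                  + cpi h B l x *\<^sub>R omult (Eh h (- (h *\<^sub>R ev l) - x + (b - h *\<^sub>R ev k))) (omult (ev l) V))
          = X k l + Y k l"
        unfolding e1 e2 e3 e4 X_def Y_def W_def by (simp add: omult_diff_left algebra_simps)
    qed
    finally show ?thesis .
  qed
  have "(\<Sum>k<8. omult (ev k) (Kt h B x (b + h *\<^sub>R ev k) V - Kt h B x (b - h *\<^sub>R ev k) V))
      = h ^ 7 *\<^sub>R (\<Sum>k<8. \<Sum>l<8. omult (ev k) (X k l) + omult (ev k) (Y k l))"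
    by (simp add: A omult_scaleR_right omult_sum_right omult_add_right scaleR_sum_right)
  also have "\<dots> = h ^ 7 *\<^sub>R (\<Sum>l<8. (\<Sum>k<8. omult (ev k) (X k l)) + (\<Sum>k<8. omult (ev k) (Y k l)))"
    by (subst sum.swap) (simp add: sum.distrib)
  also have "\<dots> = h ^ 7 *\<^sub>R (\<Sum>l<8. (cmi h B l x * (if z1 l = 0 then 2 / h ^ 7 else 0)) *\<^sub>R W l
                                + (cpi h B l x * (if z2 l = 0 then 2 / h ^ 7 else 0)) *\<^sub>R W l)"
  proof (intro arg_cong[where f="\<lambda>s. h ^ 7 *\<^sub>R s"] sum.cong refl)
    fix l
    have z1L: "z1 l \<in> lattice h" unfolding z1_def using lat_add[OF lat_diff[OF lat_hev x] b] .
    have z2L: "z2 l \<in> lattice h" unfolding z2_def using lat_add[OF lat_diff[OF lat_neg[OF lat_hev] x] b] .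
    have "(\<Sum>k<8. omult (ev k) (X k l)) = cmi h B l x *\<^sub>R (\<Sum>k<8. omult (ev k) (omult (Eh h (z1 l + h *\<^sub>R ev k) - Eh h (z1 l - h *\<^sub>R ev k)) (W l)))"
      by (simp add: X_def omult_scaleR_right scaleR_sum_right)
    also have "\<dots> = (cmi h B l x * (if z1 l = 0 then 2 / h ^ 7 else 0)) *\<^sub>R W l"
      using L z1L unfolding relL_def by simp
    finally have 1: "(\<Sum>k<8. omult (ev k) (X k l)) = (cmi h B l x * (if z1 l = 0 then 2 / h ^ 7 else 0)) *\<^sub>R W l" .
    have "(\<Sum>k<8. omult (ev k) (Y k l)) = cpi h B l x *\<^sub>R (\<Sum>k<8. omult (ev k) (omult (Eh h (z2 l + h *\<^sub>R ev k) - Eh h (z2 l - h *\<^sub>R ev k)) (W l)))"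
      by (simp add: Y_def omult_scaleR_right scaleR_sum_right)
    also have "\<dots> = (cpi h B l x * (if z2 l = 0 then 2 / h ^ 7 else 0)) *\<^sub>R W l"
      using L z2L unfolding relL_def by simp
    finally have 2: "(\<Sum>k<8. omult (ev k) (Y k l)) = (cpi h B l x * (if z2 l = 0 then 2 / h ^ 7 else 0)) *\<^sub>R W l" .
    show "(\<Sum>k<8. omult (ev k) (X k l)) + (\<Sum>k<8. omult (ev k) (Y k l)) =
          (cmi h B l x * (if z1 l = 0 then 2 / h ^ 7 else 0)) *\<^sub>R W l + (cpi h B l x * (if z2 l = 0 then 2 / h ^ 7 else 0)) *\<^sub>R W l"
      using 1 2 by simp
  qed
  also have "\<dots> = 2 *\<^sub>R (\<Sum>l<8. (if x = b + h *\<^sub>R ev l then cmi h B l x else 0) *\<^sub>R omult (ev l) V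
                      + (if x = b - h *\<^sub>R ev l then cpi h B l x else 0) *\<^sub>R omult (ev l) V)"
  proof -
    have iz1: "(z1 l = 0) = (x = b + h *\<^sub>R ev l)" for l
      unfolding z1_def by (auto simp: algebra_simps)
    have iz2: "(z2 l = 0) = (x = b - h *\<^sub>R ev l)" for l
      unfolding z2_def by (auto simp: algebra_simps)
    have cf: "h ^ 7 * (c * (if P then 2 / h ^ 7 else 0)) = 2 * (if P then c else 0)" for c P
      using h by auto
    show ?thesis unfolding iz1 iz2 W_def
      by (simp add: scaleR_sum_right scaleR_add_right cf)
  qed
  finally show ?thesis .
qed

lemma sum_delta_supp:
  fixes f :: "real^8 \<Rightarrow> octo"
  assumes "finite S" "c p \<noteq> 0 \<Longrightarrow> p \<in> S"
  shows "(\<Sum>x\<in>S. (if x = p then c x else 0) *\<^sub>R f x) = c p *\<^sub>R f p"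
proof -
  have "(\<Sum>x\<in>S. (if x = p then c x else 0) *\<^sub>R f x) = (\<Sum>x\<in>S. if x = p then c p *\<^sub>R f p else 0)"
    by (rule sum.cong) auto
  also have "\<dots> = (if p \<in> S then c p *\<^sub>R f p else 0)" using assms(1) by (simp add: sum.delta')
  also have "\<dots> = c p *\<^sub>R f p" using assms(2) by auto
  finally show ?thesis .
qed

lemma D_Aop:
  assumes h: "h > 0" and B: "B \<subseteq> lattice h" "finite B" and b: "b \<in> lattice h" and L: "relL h"
  shows "Dop h (Aop h B G) b = 2 *\<^sub>R (\<Sum>l<8. cmi h B l (b + h *\<^sub>R ev l) *\<^sub>R omult (ev l) (G (b + h *\<^sub>R ev l))
                                       + cpi h B l (b - h *\<^sub>R ev l) *\<^sub>R omult (ev l) (G (b - h *\<^sub>R ev l)))"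
proof -
  have fD: "finite (dbound h B)" using dbound_finite B(2) .
  have "Dop h (Aop h B G) b = (\<Sum>x\<in>dbound h B. \<Sum>k<8. omult (ev k) (Kt h B x (b + h *\<^sub>R ev k) (G x) - Kt h B x (b - h *\<^sub>R ev k) (G x)))"
    unfolding Dop_def Aop_def by (subst sum.swap) (simp add: sum_subtractf omult_sum_right omult_diff_right)
  also have "\<dots> = (\<Sum>x\<in>dbound h B. 2 *\<^sub>R (\<Sum>l<8. (if x = b + h *\<^sub>R ev l then cmi h B l x else 0) *\<^sub>R omult (ev l) (G x)
                      + (if x = b - h *\<^sub>R ev l then cpi h B l x else 0) *\<^sub>R omult (ev l) (G x)))"
    using Dker[OF h _ b L] dbound_lat by (intro sum.cong refl) blast
  also have "\<dots> = 2 *\<^sub>R (\<Sum>l<8. (\<Sum>x\<in>dbound h B. (if x = b + h *\<^sub>R ev l then cmi h B l x else 0) *\<^sub>R omult (ev l) (G x))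
                      + (\<Sum>x\<in>dbound h B. (if x = b - h *\<^sub>R ev l then cpi h B l x else 0) *\<^sub>R omult (ev l) (G x)))"
  proof -
    have "(\<Sum>x\<in>dbound h B. 2 *\<^sub>R (\<Sum>l<8. (if x = b + h *\<^sub>R ev l then cmi h B l x else 0) *\<^sub>R omult (ev l) (G x)
                      + (if x = b - h *\<^sub>R ev l then cpi h B l x else 0) *\<^sub>R omult (ev l) (G x)))
      = 2 *\<^sub>R (\<Sum>x\<in>dbound h B. \<Sum>l<8. (if x = b + h *\<^sub>R ev l then cmi h B l x else 0) *\<^sub>R omult (ev l) (G x)
                      + (if x = b - h *\<^sub>R ev l then cpi h B l x else 0) *\<^sub>R omult (ev l) (G x))"
      by (simp only: scaleR_sum_right)
    also have "\<dots> = 2 *\<^sub>R (\<Sum>l<8. \<Sum>x\<in>dbound h B. (if x = b + h *\<^sub>R ev l then cmi h B l x else 0) *\<^sub>R omult (ev l) (G x)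
                      + (if x = b - h *\<^sub>R ev l then cpi h B l x else 0) *\<^sub>R omult (ev l) (G x))"
      by (rule arg_cong[where f="\<lambda>s. 2 *\<^sub>R s"], rule sum.swap)
    finally show ?thesis by (simp only: sum.distrib)
  qed
  also have "\<dots> = 2 *\<^sub>R (\<Sum>l<8. cmi h B l (b + h *\<^sub>R ev l) *\<^sub>R omult (ev l) (G (b + h *\<^sub>R ev l))
                                       + cpi h B l (b - h *\<^sub>R ev l) *\<^sub>R omult (ev l) (G (b - h *\<^sub>R ev l)))"
  proof (intro arg_cong[where f="\<lambda>s. 2 *\<^sub>R s"] sum.cong refl)
    fix l assume "l \<in> {..<8::nat}"
    then have l: "l < 8" by simp
    show "(\<Sum>x\<in>dbound h B. (if x = b + h *\<^sub>R ev l then cmi h B l x else 0) *\<^sub>R omult (ev l) (G x))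
          + (\<Sum>x\<in>dbound h B. (if x = b - h *\<^sub>R ev l then cpi h B l x else 0) *\<^sub>R omult (ev l) (G x))
          = cmi h B l (b + h *\<^sub>R ev l) *\<^sub>R omult (ev l) (G (b + h *\<^sub>R ev l))
          + cpi h B l (b - h *\<^sub>R ev l) *\<^sub>R omult (ev l) (G (b - h *\<^sub>R ev l))"
      using sum_delta_supp[OF fD, of "cmi h B l" "b + h *\<^sub>R ev l" "\<lambda>x. omult (ev l) (G x)"]
            sum_delta_supp[OF fD, of "cpi h B l" "b - h *\<^sub>R ev l" "\<lambda>x. omult (ev l) (G x)"]
            cmi_supp[OF B(1) l] cpi_supp[OF B(1) l] by simp
  qed
  finally show ?thesis .
qed


lemma Aop_expand:
  assumes B: "B \<subseteq> lattice h" "finite B"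
  shows "Aop h B F y = h ^ 7 *\<^sub>R (\<Sum>l<8. \<Sum>b\<in>B.
            (omult (Eh h (h *\<^sub>R ev l - b + y)) (omult (ev l) (F b))
             - omult (Eh h (h *\<^sub>R ev l - (b + h *\<^sub>R ev l) + y)) (omult (ev l) (F (b + h *\<^sub>R ev l))))
          + (omult (Eh h (- (h *\<^sub>R ev l) - (b - h *\<^sub>R ev l) + y)) (omult (ev l) (F (b - h *\<^sub>R ev l)))
             - omult (Eh h (- (h *\<^sub>R ev l) - b + y)) (omult (ev l) (F b))))"
proof -
  define P1 where "P1 l x = omult (Eh h (h *\<^sub>R ev l - x + y)) (omult (ev l) (F x))" for l x
  define P2 where "P2 l x = omult (Eh h (- (h *\<^sub>R ev l) - x + y)) (omult (ev l) (F x))" for l x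
  have "Aop h B F y = h ^ 7 *\<^sub>R (\<Sum>x\<in>dbound h B. \<Sum>l<8. cmi h B l x *\<^sub>R P1 l x + cpi h B l x *\<^sub>R P2 l x)"
    by (simp add: Aop_def Kt_def P1_def P2_def scaleR_sum_right)
  also have "\<dots> = h ^ 7 *\<^sub>R (\<Sum>l<8. \<Sum>x\<in>dbound h B. cmi h B l x *\<^sub>R P1 l x + cpi h B l x *\<^sub>R P2 l x)"
    by (subst sum.swap) (rule refl)
  also have "\<dots> = h ^ 7 *\<^sub>R (\<Sum>l<8. (\<Sum>x\<in>dbound h B. cmi h B l x *\<^sub>R P1 l x) + (\<Sum>x\<in>dbound h B. cpi h B l x *\<^sub>R P2 l x))"
    by (simp add: sum.distrib)
  also have "\<dots> = h ^ 7 *\<^sub>R (\<Sum>l<8. (\<Sum>b\<in>B. P1 l b - P1 l (b + h *\<^sub>R ev l)) + (\<Sum>b\<in>B. P2 l (b - h *\<^sub>R ev l) - P2 l b))"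
    by (intro arg_cong[where f="\<lambda>s. h ^ 7 *\<^sub>R s"] sum.cong refl) (simp add: sum_cm[OF B] sum_cp[OF B])
  also have "\<dots> = h ^ 7 *\<^sub>R (\<Sum>l<8. \<Sum>b\<in>B. (P1 l b - P1 l (b + h *\<^sub>R ev l)) + (P2 l (b - h *\<^sub>R ev l) - P2 l b))"
    by (simp add: sum.distrib)
  finally show ?thesis unfolding P1_def P2_def .
qed

lemma AA:
  assumes h: "h > 0" and B: "B \<subseteq> lattice h" "finite B" and y: "y \<in> lattice h" and R: "relR h" and L: "relL h"
  shows "Aop h B (Aop h B G) y = (if y \<in> B then 2 else 0) *\<^sub>R Aop h B G y - 2 *\<^sub>R Aop h B (\<lambda>x. (1 - chi B x) *\<^sub>R G x) y"
proof -
  define M where "M l b = cmi h B l (b + h *\<^sub>R ev l) *\<^sub>R omult (Eh h (y - b)) (omult (ev l) (G (b + h *\<^sub>R ev l)))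
                        + cpi h B l (b - h *\<^sub>R ev l) *\<^sub>R omult (Eh h (y - b)) (omult (ev l) (G (b - h *\<^sub>R ev l)))" for l b
  have "h ^ 7 *\<^sub>R (\<Sum>b\<in>B. omult (Eh h (y - b)) (Dop h (Aop h B G) b))
      = h ^ 7 *\<^sub>R (\<Sum>b\<in>B. 2 *\<^sub>R (\<Sum>l<8. M l b))"
  proof (intro arg_cong[where f="\<lambda>s. h ^ 7 *\<^sub>R s"] sum.cong refl)
    fix b assume "b \<in> B"
    then have bL: "b \<in> lattice h" using B(1) by blast
    show "omult (Eh h (y - b)) (Dop h (Aop h B G) b) = 2 *\<^sub>R (\<Sum>l<8. M l b)"
      unfolding D_Aop[OF h B bL L] M_def
      by (simp add: omult_scaleR_right omult_sum_right omult_add_right)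
  qed
  also have "\<dots> = 2 *\<^sub>R (h ^ 7 *\<^sub>R (\<Sum>l<8. \<Sum>b\<in>B. M l b))"
    by (subst sum.swap) (simp add: scaleR_sum_right mult.commute)
  also have "h ^ 7 *\<^sub>R (\<Sum>l<8. \<Sum>b\<in>B. M l b) = Aop h B (\<lambda>x. (1 - chi B x) *\<^sub>R G x) y"
  proof -
    have "Aop h B (\<lambda>x. (1 - chi B x) *\<^sub>R G x) y = h ^ 7 *\<^sub>R (\<Sum>l<8. \<Sum>b\<in>B. M l b)"
      unfolding Aop_expand[OF B]
    proof (intro arg_cong[where f="\<lambda>s. h ^ 7 *\<^sub>R s"] sum.cong refl)
      fix l b assume "b \<in> B"
      then have cb: "chi B b = 1" by (simp add: chi_def)
      have e1: "h *\<^sub>R ev l - (b + h *\<^sub>R ev l) + y = y - b" by (simp add: algebra_simps)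
      have e2: "- (h *\<^sub>R ev l) - (b - h *\<^sub>R ev l) + y = y - b" by (simp add: algebra_simps)
      have c1: "cmi h B l (b + h *\<^sub>R ev l) = - (1 - chi B (b + h *\<^sub>R ev l))"
        using cb by (simp add: cmi_def)
      have c2: "cpi h B l (b - h *\<^sub>R ev l) = 1 - chi B (b - h *\<^sub>R ev l)"
        using cb by (simp add: cpi_def)
      show "omult (Eh h (h *\<^sub>R ev l - b + y)) (omult (ev l) ((1 - chi B b) *\<^sub>R G b)) -
          omult (Eh h (h *\<^sub>R ev l - (b + h *\<^sub>R ev l) + y)) (omult (ev l) ((1 - chi B (b + h *\<^sub>R ev l)) *\<^sub>R G (b + h *\<^sub>R ev l))) +
          (omult (Eh h (- (h *\<^sub>R ev l) - (b - h *\<^sub>R ev l) + y)) (omult (ev l) ((1 - chi B (b - h *\<^sub>R ev l)) *\<^sub>R G (b - h *\<^sub>R ev l))) -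
           omult (Eh h (- (h *\<^sub>R ev l) - b + y)) (omult (ev l) ((1 - chi B b) *\<^sub>R G b))) = M l b"
        unfolding e1 e2 M_def c1 c2 cb by (simp add: omult_scaleR_right omult_zero_right) (simp add: algebra_simps)
    qed
    then show ?thesis by simp
  qed
  finally have X: "h ^ 7 *\<^sub>R (\<Sum>b\<in>B. omult (Eh h (y - b)) (Dop h (Aop h B G) b)) = 2 *\<^sub>R Aop h B (\<lambda>x. (1 - chi B x) *\<^sub>R G x) y" .
  show ?thesis using BP[OF h B y R, of "Aop h B G"] X by simp
qed

lemma Sop_eq:
  assumes h: "h > 0" and B: "B \<subseteq> lattice h" "finite B" and y: "y \<in> lattice h" and R: "relR h"
  shows "Sop h B g y = Aop h B g y + (1 - 2 * chi B y) *\<^sub>R g y"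
  unfolding Sop_A[OF h, of B g y] Aop_const[OF h B y R, of "g y"]
  by (cases "y \<in> B") (simp_all add: chi_def vec_eq_iff algebra_simps)

lemma SS:
  assumes h: "h > 0" and B: "B \<subseteq> lattice h" "finite B" and y: "y \<in> lattice h" and R: "relR h" and L: "relL h"
  shows "Sop h B (Sop h B g) y = g y"
proof -
  define P where "P = Aop h B g y"
  define Q where "Q = Aop h B (\<lambda>x. chi B x *\<^sub>R g x) y"
  define c where "c = chi B y"
  have c01: "c = 0 \<or> c = 1" by (simp add: c_def chi_def indicator_def)
  have "Aop h B (Sop h B g) y = Aop h B (\<lambda>x. Aop h B g x + (1 - 2 * chi B x) *\<^sub>R g x) y"
    using Sop_eq[OF h B _ R] dbound_lat by (intro Aop_cong) blast
  also have "\<dots> = Aop h B (Aop h B g) y + Aop h B (\<lambda>x. (1 - 2 * chi B x) *\<^sub>R g x) y"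
    by (rule Aop_add)
  also have "(\<lambda>x. (1 - 2 * chi B x) *\<^sub>R g x) = (\<lambda>x. g x - 2 *\<^sub>R (chi B x *\<^sub>R g x))"
    by (rule ext) (simp add: scaleR_diff_left)
  also have "Aop h B (\<lambda>x. g x - 2 *\<^sub>R (chi B x *\<^sub>R g x)) y = P - 2 *\<^sub>R Q"
    by (simp only: Aop_diff Aop_scaleR P_def Q_def)
  also have "Aop h B (Aop h B g) y = (if y \<in> B then 2 else 0) *\<^sub>R P - 2 *\<^sub>R (P - Q)"
  proof -
    have "(\<lambda>x. (1 - chi B x) *\<^sub>R g x) = (\<lambda>x. g x - chi B x *\<^sub>R g x)"
      by (rule ext) (simp add: scaleR_diff_left)
    then have "Aop h B (\<lambda>x. (1 - chi B x) *\<^sub>R g x) y = Aop h B (\<lambda>x. g x - chi B x *\<^sub>R g x) y"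
      by simp
    also have "\<dots> = P - Q" by (simp add: Aop_diff P_def Q_def)
    finally show ?thesis using AA[OF h B y R L, of g] by (simp add: P_def)
  qed
  finally have AS0: "Aop h B (Sop h B g) y = (if y \<in> B then 2 else 0) *\<^sub>R P - 2 *\<^sub>R (P - Q) + (P - 2 *\<^sub>R Q)" .
  have AS: "Aop h B (Sop h B g) y = (2 * c - 1) *\<^sub>R P"
    unfolding AS0 by (cases "y \<in> B") (simp_all add: c_def chi_def vec_eq_iff algebra_simps)
  have "Sop h B (Sop h B g) y = Aop h B (Sop h B g) y + (1 - 2 * c) *\<^sub>R Sop h B g y"
    using Sop_eq[OF h B y R] c_def by simp
  also have "\<dots> = (2 * c - 1) *\<^sub>R P + (1 - 2 * c) *\<^sub>R (P + (1 - 2 * c) *\<^sub>R g y)"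
    using AS Sop_eq[OF h B y R, of g] by (simp add: P_def c_def)
  also have "\<dots> = ((1 - 2 * c) * (1 - 2 * c)) *\<^sub>R g y" by (simp add: vec_eq_iff algebra_simps)
  also have "\<dots> = g y" using c01 by auto
  finally show ?thesis .
qed

lemma Sop_lin:
  assumes h: "h > 0" and B: "B \<subseteq> lattice h" "finite B" and y: "y \<in> lattice h" and R: "relR h"
  shows "Sop h B (\<lambda>x. a *\<^sub>R F x + b *\<^sub>R G x) y = a *\<^sub>R Sop h B F y + b *\<^sub>R Sop h B G y"
  unfolding Sop_eq[OF assms] by (simp add: Aop_add Aop_scaleR algebra_simps)

theorem main_alg:
  assumes h: "h > 0" and B: "B \<subseteq> lattice h" "bounded B" and R: "relR h" and L: "relL h"
  shows "\<forall>g :: real ^ 8 \<Rightarrow> octo. \<forall>y\<in>dbound h B.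
           Pop h B (Pop h B g) y = Pop h B g y
         \<and> Qop h B (Qop h B g) y = Qop h B g y
         \<and> Pop h B (Qop h B g) y = 0
         \<and> Qop h B (Pop h B g) y = 0"
proof (intro allI ballI)
  fix g :: "real^8 \<Rightarrow> octo" and y assume "y \<in> dbound h B"
  then have y: "y \<in> lattice h" using dbound_lat by blast
  have fB: "finite B" using lattice_finite[OF h B] .
  note lin = Sop_lin[OF h B(1) fB y R]
  have SS': "Sop h B (Sop h B g) y = g y" using SS[OF h B(1) fB y R L] .
  have PF: "Pop h B g = (\<lambda>x. (1/2) *\<^sub>R g x + (1/2) *\<^sub>R Sop h B g x)"
    by (rule ext) (simp add: Pop_def scaleR_add_right)
  have QF: "Qop h B g = (\<lambda>x. (1/2) *\<^sub>R g x + (- 1/2) *\<^sub>R Sop h B g x)"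
    by (rule ext) (simp add: Qop_def scaleR_diff_right)
  have SP: "Sop h B (Pop h B g) y = (1/2) *\<^sub>R Sop h B g y + (1/2) *\<^sub>R g y"
    unfolding PF lin SS' ..
  have SQ: "Sop h B (Qop h B g) y = (1/2) *\<^sub>R Sop h B g y + (- 1/2) *\<^sub>R g y"
    unfolding QF lin SS' ..
  have Pg: "Pop h B g y = (1/2) *\<^sub>R (g y + Sop h B g y)" by (simp add: Pop_def)
  have Qg: "Qop h B g y = (1/2) *\<^sub>R (g y - Sop h B g y)" by (simp add: Qop_def)
  have PP: "Pop h B (Pop h B g) y = (1/2) *\<^sub>R (Pop h B g y + Sop h B (Pop h B g) y)" by (simp only: Pop_def)
  have QQ: "Qop h B (Qop h B g) y = (1/2) *\<^sub>R (Qop h B g y - Sop h B (Qop h B g) y)" by (simp only: Qop_def)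
  have PQ: "Pop h B (Qop h B g) y = (1/2) *\<^sub>R (Qop h B g y + Sop h B (Qop h B g) y)" by (simp only: Pop_def)
  have QP: "Qop h B (Pop h B g) y = (1/2) *\<^sub>R (Pop h B g y - Sop h B (Pop h B g) y)" by (simp only: Qop_def)
  show "Pop h B (Pop h B g) y = Pop h B g y
         \<and> Qop h B (Qop h B g) y = Qop h B g y
         \<and> Pop h B (Qop h B g) y = 0
         \<and> Qop h B (Pop h B g) y = 0"
    unfolding PP QQ PQ QP SP SQ Pg Qg by (simp add: vec_eq_iff field_simps)
qed




lemma integral_lborel_prod:
  fixes f :: "'a::euclidean_space \<Rightarrow> real \<Rightarrow> complex"
  assumes [measurable]: "\<And>b. b \<in> Basis \<Longrightarrow> f b \<in> borel_measurable borel"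
  assumes int: "\<And>b. b \<in> Basis \<Longrightarrow> integrable lborel (f b)"
  shows "(\<integral>x. (\<Prod>b\<in>Basis. f b (x \<bullet> b)) \<partial>lborel) = (\<Prod>b\<in>Basis. (\<integral>x. f b x \<partial>lborel))"
proof -
  have "(\<integral>x. (\<Prod>b\<in>Basis. f b (x \<bullet> b)) \<partial>lborel)
     = (\<integral>x. (\<Prod>b\<in>Basis. f b ((\<Sum>b'\<in>Basis. x b' *\<^sub>R b') \<bullet> b)) \<partial>(\<Pi>\<^sub>M b\<in>Basis. lborel))"
  proof -
    have m: "(\<lambda>x. \<Sum>b\<in>Basis. x b *\<^sub>R b) \<in> measurable (\<Pi>\<^sub>M b\<in>Basis. (lborel::real measure)) (borel :: 'a measure)"
      by measurable
    have mf: "(\<lambda>x::'a. \<Prod>b\<in>Basis. f b (x \<bullet> b)) \<in> borel_measurable borel"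
      by measurable
    show ?thesis unfolding lborel_eq[where 'a='a] by (rule integral_distr[OF m mf])
  qed
  also have "\<dots> = (\<integral>x. (\<Prod>b\<in>Basis. f b (x b)) \<partial>(\<Pi>\<^sub>M b\<in>Basis. lborel))"
  proof (rule Bochner_Integration.integral_cong[OF refl])
    fix x :: "'a \<Rightarrow> real" assume "x \<in> space (\<Pi>\<^sub>M b\<in>(Basis::'a set). (lborel :: real measure))"
    have "(\<Sum>b'\<in>(Basis::'a set). x b' *\<^sub>R b') \<bullet> b = x b" if "b \<in> Basis" for b :: 'a
      using that by (simp add: inner_sum_left inner_Basis if_distrib[of "\<lambda>t. _ * t"] cong: if_cong)
    then show "(\<Prod>b\<in>Basis. f b ((\<Sum>b'\<in>Basis. x b' *\<^sub>R b') \<bullet> b)) = (\<Prod>b\<in>Basis. f b (x b))"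
      by (intro prod.cong) auto
  qed
  also have "\<dots> = (\<Prod>b\<in>Basis. (\<integral>x. f b x \<partial>lborel))"
    by (rule product_sigma_finite.product_integral_prod) (auto intro: int lborel.sigma_finite_measure_axioms simp: product_sigma_finite_def)
  finally show ?thesis .
qed


lemma Basis8: "(Basis :: (real^8) set) = range (\<lambda>i. axis i 1)"
  by (auto simp: Basis_vec_def)

lemma prod_Basis8: "(\<Prod>b\<in>(Basis::(real^8) set). f b) = (\<Prod>i\<in>UNIV. f (axis i 1))"
  unfolding Basis8 by (subst prod.reindex) (auto simp: inj_on_def axis_eq_axis)

lemma inner_axis1: "inner u (axis i (1::real)) = u $ i"
  by (simp add: inner_axis)

lemma exp_int_1d:
  assumes n: "n \<in> \<int>"
  shows "(\<integral>t. indicator {-pi..pi} t *\<^sub>R exp (\<i> * complex_of_real (n * t)) \<partial>lborel) = (if n = 0 then 2 * pi else 0)"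
proof -
  define f where "f t = exp (\<i> * complex_of_real (n * t))" for t
  have int: "integrable lborel (\<lambda>t. indicator {-pi..pi} t *\<^sub>R f t)"
    by (rule borel_integrable_compact) (auto simp: f_def intro!: continuous_intros)
  then have "(\<integral>t. indicator {-pi..pi} t *\<^sub>R f t \<partial>lborel) = integral {-pi..pi} f"
    using set_borel_integral_eq_integral(2)[of "{-pi..pi}" f]
    by (simp add: set_integrable_def set_lebesgue_integral_def)
  also have "\<dots> = (if n = 0 then 2 * pi else 0)"
  proof (cases "n = 0")
    case True
    then have "f = (\<lambda>t. 1)" by (auto simp: f_def)
    then show ?thesis using True by (simp add: scaleR_conv_of_real)
  next
    case False
    define F where "F = (\<lambda>t. exp (\<i> * complex_of_real (n * t)) / (\<i> * complex_of_real n))"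
    have d: "(F has_vector_derivative f t) (at t within {-pi..pi})" for t
    proof -
      have "((\<lambda>z. exp (\<i> * complex_of_real n * z) / (\<i> * complex_of_real n)) has_field_derivative
              exp (\<i> * complex_of_real n * complex_of_real t)) (at (complex_of_real t))"
        using False by (auto intro!: derivative_eq_intros)
      from has_vector_derivative_real_field[OF this]
      show ?thesis by (simp add: F_def f_def mult.assoc)
    qed
    have "(f has_integral (F pi - F (- pi))) {-pi..pi}"
      by (rule fundamental_theorem_of_calculus) (use d pi_gt_zero in auto)
    moreover have "F pi = F (- pi)"
    proof -
      have s: "sin (n * pi) = 0" using n sin_times_pi_eq_0 by blast
      have "exp (\<i> * complex_of_real (n * pi)) = exp (\<i> * complex_of_real (n * - pi))"
        by (simp add: complex_eq_iff Re_exp Im_exp s)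
      then show ?thesis by (simp add: F_def)
    qed
    ultimately show ?thesis using False by (simp add: integral_unique)
  qed
  finally show ?thesis by (simp add: f_def)
qed


abbreviation cube :: "(real^8) set" where "cube \<equiv> cbox (- (\<chi> i. pi)) (\<chi> i. pi)"

lemma cube_exp:
  fixes w :: "real^8"
  assumes w: "\<forall>i. w $ i \<in> \<int>"
  shows "integral cube (\<lambda>u. exp (\<i> * complex_of_real (inner u w))) = (if w = 0 then complex_of_real ((2 * pi) ^ 8) else 0)"
proof -
  define F where "F = (\<lambda>u. exp (\<i> * complex_of_real (inner u w)))"
  define g where "g b t = indicator {-pi..pi} t *\<^sub>R exp (\<i> * complex_of_real ((w \<bullet> b) * t))" for b :: "real^8" and t :: real
  have int: "integrable lborel (\<lambda>u. indicator cube u *\<^sub>R F u)"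
    by (rule borel_integrable_compact) (auto simp: F_def intro!: continuous_intros)
  then have "integral cube F = (\<integral>u. indicator cube u *\<^sub>R F u \<partial>lborel)"
    using set_borel_integral_eq_integral(2)[of cube F]
    by (simp add: set_integrable_def set_lebesgue_integral_def)
  also have "\<dots> = (\<integral>u. (\<Prod>b\<in>Basis. g b (u \<bullet> b)) \<partial>lborel)"
  proof (rule Bochner_Integration.integral_cong[OF refl])
    fix u :: "real^8"
    have mem: "u \<in> cube \<longleftrightarrow> (\<forall>i. u $ i \<in> {-pi..pi})"
      by (auto simp: mem_box_cart)
    have "(\<Prod>b\<in>Basis. g b (u \<bullet> b)) = (\<Prod>i\<in>UNIV. g (axis i 1) (u $ i))"
      by (simp add: prod_Basis8 inner_axis1)
    also have "\<dots> = (\<Prod>i\<in>UNIV. complex_of_real (indicator {-pi..pi} (u $ i)) * exp (\<i> * complex_of_real (w $ i * u $ i)))"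
      by (simp add: g_def inner_axis1 scaleR_conv_of_real)
    also have "\<dots> = complex_of_real (\<Prod>i\<in>UNIV. indicator {-pi..pi} (u $ i)) * exp (\<Sum>i\<in>UNIV. \<i> * complex_of_real (w $ i * u $ i))"
      by (simp add: prod.distrib exp_sum)
    also have "(\<Prod>i\<in>UNIV. indicator {-pi..pi} (u $ i)) = (indicator cube u :: real)"
      using mem by (auto simp: indicator_def prod_zero_iff)
    also have "(\<Sum>i\<in>UNIV. \<i> * complex_of_real (w $ i * u $ i)) = \<i> * complex_of_real (inner u w)"
      by (simp add: inner_vec_def sum_distrib_left mult.commute)
    finally show "indicator cube u *\<^sub>R F u = (\<Prod>b\<in>Basis. g b (u \<bullet> b))"
      by (simp add: F_def scaleR_conv_of_real)
  qed
  also have "\<dots> = (\<Prod>b\<in>Basis. (\<integral>t. g b t \<partial>lborel))"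
  proof (rule integral_lborel_prod)
    fix b :: "real^8" assume "b \<in> Basis"
    show "g b \<in> borel_measurable borel" unfolding g_def by measurable
    show "integrable lborel (g b)" unfolding g_def
      by (rule borel_integrable_compact) (auto intro!: continuous_intros)
  qed
  also have "\<dots> = (\<Prod>i\<in>UNIV. (if w $ i = 0 then complex_of_real (2 * pi) else 0))"
  proof -
    have "(\<integral>t. g (axis i 1) t \<partial>lborel) = (if w $ i = 0 then complex_of_real (2 * pi) else 0)" for i
      using exp_int_1d[of "w $ i"] w by (simp add: g_def inner_axis1 split: if_splits)
    then show ?thesis by (simp add: prod_Basis8)
  qed
  also have "\<dots> = (if w = 0 then complex_of_real ((2 * pi) ^ 8) else 0)"
  proof (cases "w = 0")
    case True then show ?thesis by simp
  next
    case False
    then obtain i where "w $ i \<noteq> 0" by (auto simp: vec_eq_iff)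
    then show ?thesis using False by (auto simp: prod_zero_iff)
  qed
  finally have "integral cube F = (if w = 0 then complex_of_real ((2 * pi) ^ 8) else 0)" .
  then show ?thesis unfolding F_def .
qed

lemma cube_cos:
  fixes w :: "real^8"
  assumes w: "\<forall>i. w $ i \<in> \<int>"
  shows "integral cube (\<lambda>u. cos (inner u w)) = (if w = 0 then (2 * pi) ^ 8 else 0)"
proof -
  define F where "F = (\<lambda>u. exp (\<i> * complex_of_real (inner u w)))"
  have int: "F integrable_on cube"
    by (rule integrable_continuous) (auto simp: F_def intro!: continuous_intros)
  have "integral cube (\<lambda>u. cos (inner u w)) = integral cube (Re \<circ> F)"
    by (rule integral_cong) (simp add: F_def Re_exp)
  also have "\<dots> = Re (integral cube F)"
    by (rule integral_linear[OF int bounded_linear_Re])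
  also have "\<dots> = (if w = 0 then (2 * pi) ^ 8 else 0)"
    using cube_exp[OF w] by (simp add: F_def)
  finally show ?thesis .
qed


lemma sin_lb_pos:
  assumes "0 \<le> s" "s \<le> pi / 2"
  shows "s / 4 \<le> sin s"
proof (cases "s \<le> pi / 3")
  case True
  have "(\<lambda>t. sin t - t / 2) 0 \<le> (\<lambda>t. sin t - t / 2) s"
  proof (rule DERIV_nonneg_imp_nondecreasing[OF assms(1)])
    fix t assume t: "0 \<le> t" "t \<le> s"
    have "cos (pi / 3) \<le> cos t" using t True by (intro cos_monotone_0_pi_le) auto
    then have "cos t - 1 / 2 \<ge> 0" by (simp add: cos_60)
    moreover have "DERIV (\<lambda>t. sin t - t / 2) t :> cos t - 1 / 2"
      by (auto intro!: derivative_eq_intros)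
    ultimately show "\<exists>y. DERIV (\<lambda>t. sin t - t / 2) t :> y \<and> y \<ge> 0" by blast
  qed
  then show ?thesis using assms by simp
next
  case False
  have "sin (pi / 3) \<le> sin s" using False assms by (intro sin_monotone_2pi_le) auto
  then have "sqrt 3 / 2 \<le> sin s" by (simp add: sin_60)
  moreover have "1 \<le> sqrt 3" by simp
  moreover have "s / 4 \<le> 1 / 2" using assms pi_less_4 by simp
  ultimately show ?thesis by linarith
qed

lemma sin_lb:
  assumes "\<bar>s\<bar> \<le> pi / 2"
  shows "\<bar>s\<bar> / 4 \<le> \<bar>sin s\<bar>"
proof (cases "s \<ge> 0")
  case True then show ?thesis using sin_lb_pos[of s] assms by simp
next
  case False then show ?thesis using sin_lb_pos[of "- s"] assms by simp
qed

lemma sin_powr_bound: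
  assumes t: "t \<in> {-pi..pi}"
  shows "\<bar>sin t\<bar> powr (- 1 / 2) \<le> 2 * (\<bar>t\<bar> powr (- 1 / 2) + \<bar>t - pi\<bar> powr (- 1 / 2) + \<bar>t + pi\<bar> powr (- 1 / 2))"
proof (cases "sin t = 0")
  case True then show ?thesis by simp
next
  case False
  have "\<exists>d. d \<in> {\<bar>t\<bar>, \<bar>t - pi\<bar>, \<bar>t + pi\<bar>} \<and> d / 4 \<le> \<bar>sin t\<bar>"
  proof -
    consider "\<bar>t\<bar> \<le> pi / 2" | "t > pi / 2" | "t < - (pi / 2)" by linarith
    then show ?thesis
    proof cases
      case 1 then show ?thesis using sin_lb[of t] by blast
    next
      case 2
      then have "\<bar>t - pi\<bar> \<le> pi / 2" using t by auto
      from sin_lb[OF this] have "\<bar>t - pi\<bar> / 4 \<le> \<bar>sin t\<bar>" by simp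
      then show ?thesis by blast
    next
      case 3
      then have "\<bar>t + pi\<bar> \<le> pi / 2" using t by auto
      from sin_lb[OF this] have "\<bar>t + pi\<bar> / 4 \<le> \<bar>sin t\<bar>" by simp
      then show ?thesis by blast
    qed
  qed
  then obtain d where d: "d \<in> {\<bar>t\<bar>, \<bar>t - pi\<bar>, \<bar>t + pi\<bar>}" "d / 4 \<le> \<bar>sin t\<bar>" by blast
  have dpos: "d > 0"
  proof (rule ccontr)
    assume "\<not> d > 0"
    then have "d = 0" using d(1) by auto
    then have "t = 0 \<or> t = pi \<or> t = - pi" using d(1) by auto
    then show False using False by auto
  qed
  have "\<bar>sin t\<bar> powr (- 1 / 2) \<le> (d / 4) powr (- 1 / 2)"
    using d(2) dpos by (intro powr_mono2') auto
  also have "(d / 4) powr (- 1 / 2) = 2 * d powr (- 1 / 2)"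
  proof -
    have f4: "(4::real) powr (- 1 / 2) = 1 / 2"
      by (simp add: powr_minus_divide powr_half_sqrt[symmetric, of 4] flip: powr_minus)
    show ?thesis by (simp only: powr_divide f4) simp
  qed
  also have "\<dots> \<le> 2 * (\<bar>t\<bar> powr (- 1 / 2) + \<bar>t - pi\<bar> powr (- 1 / 2) + \<bar>t + pi\<bar> powr (- 1 / 2))"
    using d(1) by auto
  finally show ?thesis .
qed


lemma nn_half:
  assumes "a \<ge> 0"
  shows "(\<integral>\<^sup>+ s. ennreal (indicator {0..a} s * s powr (- 1 / 2)) \<partial>lborel) < \<infinity>"
proof -
  have "((\<lambda>x. x powr (- 1 / 2)) has_integral (a powr (- 1 / 2 + 1) / (- 1 / 2 + 1))) {0..a}"
    by (rule has_integral_powr_from_0) (use assms in auto)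
  from nn_integral_has_integral_lebesgue[OF _ this]
  have "(\<integral>\<^sup>+ s. ennreal (indicator {0..a} s * s powr (- 1 / 2)) \<partial>lborel) = ennreal (a powr (- 1 / 2 + 1) / (- 1 / 2 + 1))"
    by simp
  then show ?thesis by simp
qed

lemma nn_abs:
  assumes "a \<ge> 0"
  shows "(\<integral>\<^sup>+ s. ennreal (indicator {-a..a} s * \<bar>s\<bar> powr (- 1 / 2)) \<partial>lborel) < \<infinity>"
proof -
  define f where "f s = ennreal (indicator {0..a} s * s powr (- 1 / 2))" for s :: real
  have fm[measurable]: "f \<in> borel_measurable borel" unfolding f_def by measurable
  have le: "ennreal (indicator {-a..a} s * \<bar>s\<bar> powr (- 1 / 2)) \<le> f s + f (0 + (-1) * s)" for s
  proof (cases "s \<ge> 0")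
    case True then show ?thesis by (auto simp: f_def indicator_def)
  next
    case False then show ?thesis by (auto simp: f_def indicator_def)
  qed
  have "(\<integral>\<^sup>+ s. ennreal (indicator {-a..a} s * \<bar>s\<bar> powr (- 1 / 2)) \<partial>lborel) \<le> (\<integral>\<^sup>+ s. f s + f (0 + (-1) * s) \<partial>lborel)"
    by (rule nn_integral_mono) (rule le)
  also have "\<dots> = (\<integral>\<^sup>+ s. f s \<partial>lborel) + (\<integral>\<^sup>+ s. f (0 + (-1) * s) \<partial>lborel)"
    by (rule nn_integral_add) auto
  also have "(\<integral>\<^sup>+ s. f (0 + (-1) * s) \<partial>lborel) = (\<integral>\<^sup>+ s. f s \<partial>lborel)"
    using nn_integral_real_affine[OF fm, of "-1" 0] by simp
  also have "(\<integral>\<^sup>+ s. f s \<partial>lborel) < \<infinity>" using nn_half[OF assms] by (simp add: f_def)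
  then have "(\<integral>\<^sup>+ s. f s \<partial>lborel) + (\<integral>\<^sup>+ s. f s \<partial>lborel) < \<infinity>" by simp
  finally show ?thesis .
qed

lemma nn_shift:
  assumes "\<bar>c\<bar> \<le> pi"
  shows "(\<integral>\<^sup>+ t. ennreal (indicator {-pi..pi} t * \<bar>t - c\<bar> powr (- 1 / 2)) \<partial>lborel) < \<infinity>"
proof -
  define f where "f t = ennreal (indicator {c - 2 * pi..c + 2 * pi} t * \<bar>t - c\<bar> powr (- 1 / 2))" for t :: real
  have fm[measurable]: "f \<in> borel_measurable borel" unfolding f_def by measurable
  have "(\<integral>\<^sup>+ t. ennreal (indicator {-pi..pi} t * \<bar>t - c\<bar> powr (- 1 / 2)) \<partial>lborel) \<le> (\<integral>\<^sup>+ t. f t \<partial>lborel)"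
    by (rule nn_integral_mono) (use assms in \<open>auto simp: f_def indicator_def\<close>)
  also have "\<dots> = (\<integral>\<^sup>+ x. f (c + 1 * x) \<partial>lborel)"
    using nn_integral_real_affine[OF fm, of 1 c] by simp
  also have "\<dots> = (\<integral>\<^sup>+ x. ennreal (indicator {-(2*pi)..2*pi} x * \<bar>x\<bar> powr (- 1 / 2)) \<partial>lborel)"
    by (rule nn_integral_cong) (auto simp: f_def indicator_def)
  also have "\<dots> < \<infinity>" by (rule nn_abs) simp
  finally show ?thesis .
qed

lemma nn_sin:
  "(\<integral>\<^sup>+ t. ennreal (indicator {-pi..pi} t * \<bar>sin t\<bar> powr (- 1 / 2)) \<partial>lborel) < \<infinity>"
proof -
  define g where "g c t = ennreal (indicator {-pi..pi} t * \<bar>t - c\<bar> powr (- 1 / 2))" for c t :: real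
  have gm[measurable]: "g c \<in> borel_measurable borel" for c unfolding g_def by measurable
  have "(\<integral>\<^sup>+ t. ennreal (indicator {-pi..pi} t * \<bar>sin t\<bar> powr (- 1 / 2)) \<partial>lborel)
      \<le> (\<integral>\<^sup>+ t. 2 * (g 0 t + g pi t + g (- pi) t) \<partial>lborel)"
  proof (rule nn_integral_mono)
    fix t
    show "ennreal (indicator {-pi..pi} t * \<bar>sin t\<bar> powr (- 1 / 2)) \<le> 2 * (g 0 t + g pi t + g (- pi) t)"
    proof (cases "t \<in> {-pi..pi}")
      case True
      then have "\<bar>sin t\<bar> powr (- 1 / 2) \<le> 2 * (\<bar>t\<bar> powr (- 1 / 2) + \<bar>t - pi\<bar> powr (- 1 / 2) + \<bar>t + pi\<bar> powr (- 1 / 2))"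
        by (rule sin_powr_bound)
      then have "ennreal (\<bar>sin t\<bar> powr (- 1 / 2)) \<le> ennreal (2 * (\<bar>t\<bar> powr (- 1 / 2) + \<bar>t - pi\<bar> powr (- 1 / 2) + \<bar>t + pi\<bar> powr (- 1 / 2)))"
        by (rule ennreal_leI)
      also have "\<dots> = 2 * ennreal (\<bar>t\<bar> powr (- 1 / 2) + \<bar>t - pi\<bar> powr (- 1 / 2) + \<bar>t + pi\<bar> powr (- 1 / 2))"
        by (subst ennreal_mult') auto
      also have "\<dots> = 2 * (ennreal (\<bar>t\<bar> powr (- 1 / 2)) + ennreal (\<bar>t - pi\<bar> powr (- 1 / 2)) + ennreal (\<bar>t + pi\<bar> powr (- 1 / 2)))"
        by simp
      finally show ?thesis using True by (simp add: g_def)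
    qed (simp add: g_def)
  qed
  also have "\<dots> = 2 * ((\<integral>\<^sup>+ t. g 0 t \<partial>lborel) + (\<integral>\<^sup>+ t. g pi t \<partial>lborel) + (\<integral>\<^sup>+ t. g (- pi) t \<partial>lborel))"
    by (simp add: nn_integral_cmult nn_integral_add)
  also have "\<dots> < \<infinity>"
    using nn_shift[of 0] nn_shift[of pi] nn_shift[of "- pi"]
    by (simp add: g_def ennreal_mult_less_top)
  finally show ?thesis .
qed


definition Sf :: "real^8 \<Rightarrow> real" where "Sf u = (\<Sum>l<8. (sin (u $ of_nat l))\<^sup>2)"
definition dotp :: "real^8 \<Rightarrow> real^8 \<Rightarrow> real" where "dotp u x = (\<Sum>l<8. u $ of_nat l * x $ of_nat l)"

lemma null_sin: "emeasure lborel {u::real^8. sin (u $ i) = 0} = 0"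
proof -
  define Z where "Z = {t::real. sin t = 0}"
  have Zc: "Z = range (\<lambda>n::int. of_int n * pi)" unfolding Z_def by (auto simp: sin_zero_iff_int2)
  have Z0: "emeasure lborel Z = 0" unfolding Zc by (rule emeasure_lborel_countable) simp
  have Zm[measurable]: "Z \<in> sets borel" unfolding Z_def by measurable
  define hf where "hf b t = (if b = axis i 1 then indicator Z t else 1::real)" for b :: "real^8" and t :: real
  have hm[measurable]: "hf b \<in> borel_measurable borel" for b unfolding hf_def by measurable
  have "emeasure lborel {u::real^8. sin (u $ i) = 0} = (\<integral>\<^sup>+ u. indicator {u::real^8. sin (u $ i) = 0} u \<partial>lborel)"
    by (rule nn_integral_indicator[symmetric]) measurable
  also have "\<dots> = (\<integral>\<^sup>+ u. (\<Prod>b\<in>Basis. ennreal (hf b (u \<bullet> b))) \<partial>lborel)"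
  proof (rule nn_integral_cong)
    fix u :: "real^8"
    have "(\<Prod>b\<in>Basis. hf b (u \<bullet> b)) = (\<Prod>j\<in>UNIV. hf (axis j 1) (u $ j))"
      by (simp add: prod_Basis8 inner_axis1)
    also have "\<dots> = (\<Prod>j\<in>UNIV. if j = i then indicator Z (u $ j) else 1)"
      by (intro prod.cong) (auto simp: hf_def axis_eq_axis)
    also have "\<dots> = indicator Z (u $ i)" by (simp add: prod.delta)
    finally have "indicator {u::real^8. sin (u $ i) = 0} u = ennreal (\<Prod>b\<in>Basis. hf b (u \<bullet> b))"
      by (simp add: Z_def indicator_def)
    also have "\<dots> = (\<Prod>b\<in>Basis. ennreal (hf b (u \<bullet> b)))"
      by (rule prod_ennreal[symmetric]) (auto simp: hf_def)
    finally show "indicator {u::real^8. sin (u $ i) = 0} u = (\<Prod>b\<in>Basis. ennreal (hf b (u \<bullet> b)))" .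
  qed
  also have "\<dots> = (\<Prod>b\<in>Basis. (\<integral>\<^sup>+ t. hf b t \<partial>lborel))"
    by (rule nn_integral_lborel_prod) (auto simp: hf_def)
  also have "\<dots> = 0"
  proof (rule prod_zero)
    show "finite (Basis :: (real^8) set)" by simp
    have "(\<integral>\<^sup>+ t. hf (axis i 1) t \<partial>lborel) = (\<integral>\<^sup>+ t. indicator Z t \<partial>lborel)"
      by (simp add: hf_def ennreal_indicator)
    also have "\<dots> = emeasure lborel Z" using Zm by (simp add: nn_integral_indicator)
    finally have "(\<integral>\<^sup>+ t. hf (axis i 1) t \<partial>lborel) = emeasure lborel Z" .
    then show "\<exists>b\<in>Basis. (\<integral>\<^sup>+ t. hf b t \<partial>lborel) = 0" using Z0 Basis8 by auto
  qed
  finally show ?thesis .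
qed

lemma AE_sin: "AE u in lborel. sin ((u::real^8) $ i) \<noteq> 0"
proof -
  have m: "{u::real^8. sin (u $ i) = 0} \<in> sets lborel" by measurable
  show ?thesis by (subst AE_iff_measurable[OF m]) (auto simp: null_sin)
qed


definition phi8 :: "real^8 \<Rightarrow> real \<Rightarrow> real" where
  "phi8 b t = indicator {-pi..pi} t * (if b = axis 0 1 \<or> b = axis 1 1 then \<bar>sin t\<bar> powr (- 1 / 2) else 1)"

lemma phi8_nonneg: "phi8 b t \<ge> 0"
  by (simp add: phi8_def)

lemma phi8_meas[measurable]: "phi8 b \<in> borel_measurable borel"
  unfolding phi8_def by measurable

lemma intG: "integrable lborel (\<lambda>u::real^8. \<Prod>b\<in>Basis. phi8 b (u \<bullet> b))"
proof (subst integrable_iff_bounded, intro conjI)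
  show "(\<lambda>u::real^8. \<Prod>b\<in>Basis. phi8 b (u \<bullet> b)) \<in> borel_measurable lborel" by measurable
  have "(\<integral>\<^sup>+ u. ennreal (norm (\<Prod>b\<in>Basis. phi8 b (u \<bullet> b))) \<partial>lborel) = (\<integral>\<^sup>+ u. (\<Prod>b\<in>(Basis::(real^8) set). ennreal (phi8 b (u \<bullet> b))) \<partial>lborel)"
    by (rule nn_integral_cong) (simp add: phi8_nonneg prod_nonneg prod_ennreal abs_prod)
  also have "\<dots> = (\<Prod>b\<in>(Basis::(real^8) set). (\<integral>\<^sup>+ t. phi8 b t \<partial>lborel))"
    by (rule nn_integral_lborel_prod) (auto simp: phi8_nonneg)
  also have "\<dots> < \<infinity>"
  proof -
    have "(\<integral>\<^sup>+ t. phi8 b t \<partial>lborel) < \<infinity>" for b :: "real^8"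
    proof (cases "b = axis 0 1 \<or> b = axis 1 1")
      case True
      then show ?thesis using nn_sin by (simp add: phi8_def)
    next
      case False
      then have "(\<integral>\<^sup>+ t. phi8 b t \<partial>lborel) = (\<integral>\<^sup>+ t. indicator {-pi..pi} t \<partial>lborel)"
        by (simp add: phi8_def ennreal_indicator)
      also have "\<dots> = emeasure lborel {-pi..pi}" by simp
      finally show ?thesis by simp
    qed
    then show ?thesis by (simp add: less_top[symmetric] ennreal_prod_eq_top)
  qed
  finally show "(\<integral>\<^sup>+ u. ennreal (norm (\<Prod>b\<in>Basis. phi8 b (u \<bullet> b))) \<partial>lborel) < \<infinity>" .
qed

lemma prod_phi8:
  assumes "u \<in> cube"
  shows "(\<Prod>b\<in>Basis. phi8 b (u \<bullet> b)) = \<bar>sin (u $ 0)\<bar> powr (- 1 / 2) * \<bar>sin (u $ 1)\<bar> powr (- 1 / 2)"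
proof -
  have mem: "u $ i \<in> {-pi..pi}" for i using assms by (auto simp: mem_box_cart)
  have "(\<Prod>b\<in>Basis. phi8 b (u \<bullet> b)) = (\<Prod>i\<in>UNIV. phi8 (axis i 1) (u $ i))"
    by (simp add: prod_Basis8 inner_axis1)
  also have "\<dots> = (\<Prod>i\<in>UNIV. if i \<in> {0, 1} then \<bar>sin (u $ i)\<bar> powr (- 1 / 2) else 1)"
    by (intro prod.cong refl) (use mem in \<open>auto simp: phi8_def axis_eq_axis\<close>)
  also have "\<dots> = (\<Prod>i\<in>{0,1}. \<bar>sin (u $ i)\<bar> powr (- 1 / 2))"
    by (rule prod.mono_neutral_cong_right) auto
  also have "\<dots> = \<bar>sin (u $ 0)\<bar> powr (- 1 / 2) * \<bar>sin (u $ 1)\<bar> powr (- 1 / 2)"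
    by simp
  finally show ?thesis .
qed


lemma powr_mhalf: "r > 0 \<Longrightarrow> r powr - (1 / 2) = 1 / sqrt r"
  by (simp add: powr_minus_divide powr_half_sqrt flip: powr_minus)

lemma E1_bound:
  assumes k: "k < 8" and s0: "sin (u $ 0) \<noteq> 0" and s1: "sin (u $ 1) \<noteq> 0"
  shows "norm (indicator cube u *\<^sub>R (sin (dotp u x) / Sf u * sin (u $ of_nat k)))
         \<le> norm ((1 / sqrt 2) * (\<Prod>b\<in>Basis. phi8 b (u \<bullet> b)))"
proof (cases "u \<in> cube")
  case False
  then show ?thesis by simp
next
  case True
  define S where "S = Sf u"
  define r0 where "r0 = \<bar>sin (u $ 0)\<bar>"
  define r1 where "r1 = \<bar>sin (u $ 1)\<bar>"
  have r0p: "r0 > 0" and r1p: "r1 > 0" using s0 s1 by (auto simp: r0_def r1_def)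
  have "(\<Sum>l\<in>{0,1::nat}. (sin (u $ of_nat l))\<^sup>2) \<le> (\<Sum>l<8. (sin (u $ of_nat l))\<^sup>2)"
    by (rule sum_mono2) auto
  then have hS: "r0\<^sup>2 + r1\<^sup>2 \<le> S" by (simp add: S_def Sf_def r0_def r1_def)
  have hk: "(sin (u $ of_nat k))\<^sup>2 \<le> S"
    unfolding S_def Sf_def by (rule member_le_sum) (use k in auto)
  have amgm: "2 * r0 * r1 \<le> r0\<^sup>2 + r1\<^sup>2" using sum_squares_bound[of r0 r1] by simp
  have "r0\<^sup>2 > 0" using r0p by simp
  moreover have "r1\<^sup>2 \<ge> 0" by simp
  ultimately have Sp: "S > 0" using hS by linarith
  have sk: "\<bar>sin (u $ of_nat k)\<bar> \<le> sqrt S"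
    using real_sqrt_le_mono[OF hk] by simp
  have "\<bar>sin (dotp u x) / S * sin (u $ of_nat k)\<bar> = \<bar>sin (dotp u x)\<bar> * \<bar>sin (u $ of_nat k)\<bar> / S"
    using Sp by (simp add: abs_mult)
  also have "\<dots> \<le> 1 * \<bar>sin (u $ of_nat k)\<bar> / S"
    using Sp by (intro divide_right_mono mult_right_mono) auto
  also have "\<dots> \<le> sqrt S / S" using sk Sp by (simp add: divide_right_mono)
  also have "\<dots> = 1 / sqrt S" using Sp by (simp add: field_simps real_sqrt_mult[symmetric] flip: power2_eq_square)
  also have "\<dots> \<le> 1 / sqrt (2 * r0 * r1)"
    using r0p r1p amgm hS Sp by (intro divide_left_mono real_sqrt_le_mono mult_pos_pos) auto
  also have "\<dots> = (1 / sqrt 2) * (r0 powr (- 1 / 2) * r1 powr (- 1 / 2))"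
    using r0p r1p by (simp add: powr_mhalf real_sqrt_mult)
  also have "\<dots> = (1 / sqrt 2) * (\<Prod>b\<in>Basis. phi8 b (u \<bullet> b))"
    using prod_phi8[OF True] by (simp add: r0_def r1_def)
  finally show ?thesis using True
    by (simp add: S_def abs_mult phi8_nonneg prod_nonneg)
qed

lemma E1_int:
  assumes k: "k < 8"
  shows "(\<lambda>u. sin (dotp u x) / Sf u * sin (u $ of_nat k)) integrable_on cube"
proof -
  have "integrable lborel (\<lambda>u. indicator cube u *\<^sub>R (sin (dotp u x) / Sf u * sin (u $ of_nat k)))"
  proof (rule Bochner_Integration.integrable_bound[OF integrable_mult_right[OF intG, of "1 / sqrt 2"]])
    show "(\<lambda>u. indicator cube u *\<^sub>R (sin (dotp u x) / Sf u * sin (u $ of_nat k))) \<in> borel_measurable lborel"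
      unfolding dotp_def Sf_def by measurable
    show "AE u in lborel. norm (indicator cube u *\<^sub>R (sin (dotp u x) / Sf u * sin (u $ of_nat k)))
            \<le> norm ((1 / sqrt 2) * (\<Prod>b\<in>Basis. phi8 b (u \<bullet> b)))"
      using AE_sin[of 0] AE_sin[of 1] by eventually_elim (rule E1_bound[OF k])
  qed
  then have "set_integrable lborel cube (\<lambda>u. sin (dotp u x) / Sf u * sin (u $ of_nat k))"
    by (simp add: set_integrable_def)
  from set_borel_integral_eq_integral(1)[OF this] show ?thesis .
qed


lemma E1_int':
  assumes k: "k < 8"
  shows "(\<lambda>u. sin (dotp u x) * sin (u $ of_nat k) / Sf u) integrable_on cube"
proof -
  have "(\<lambda>u. sin (dotp u x) * sin (u $ of_nat k) / Sf u) = (\<lambda>u. sin (dotp u x) / Sf u * sin (u $ of_nat k))"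
    by (rule ext) simp
  then show ?thesis using E1_int[OF k] by simp
qed

definition Phi :: "nat \<Rightarrow> real^8 \<Rightarrow> real" where
  "Phi k x = integral cube (\<lambda>u. sin (dotp u x) / Sf u * sin (u $ of_nat k))"

lemma integral_scaleR_left_hk:
  assumes "f integrable_on S"
  shows "integral S (\<lambda>x. f x *\<^sub>R c) = integral S f *\<^sub>R c"
  by (rule integral_unique[OF has_integral_scaleR_left[OF integrable_integral[OF assms]]])

lemma E1_expand: "E1 x = (\<Sum>k<8. (Phi k x / (2 * pi) ^ 8) *\<^sub>R oconj (ev k))"
proof -
  have "E1 x = (1 / (2 * pi) ^ 8) *\<^sub>R integral cube (\<lambda>u. \<Sum>k<8. (sin (dotp u x) / Sf u * sin (u $ of_nat k)) *\<^sub>R oconj (ev k))"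
    unfolding E1_def dotp_def Sf_def by (simp add: scaleR_sum_right)
  also have "integral cube (\<lambda>u. \<Sum>k<8. (sin (dotp u x) / Sf u * sin (u $ of_nat k)) *\<^sub>R oconj (ev k))
      = (\<Sum>k<8. integral cube (\<lambda>u. (sin (dotp u x) / Sf u * sin (u $ of_nat k)) *\<^sub>R oconj (ev k)))"
  proof (rule integral_sum)
    fix k assume "k \<in> {..<8::nat}"
    then show "(\<lambda>u. (sin (dotp u x) / Sf u * sin (u $ of_nat k)) *\<^sub>R oconj (ev k)) integrable_on cube"
      by (intro integrable_on_scaleR_left E1_int) simp
  qed simp
  also have "\<dots> = (\<Sum>k<8. Phi k x *\<^sub>R oconj (ev k))"
  proof (intro sum.cong refl)
    fix k assume "k \<in> {..<8::nat}"
    then show "integral cube (\<lambda>u. (sin (dotp u x) / Sf u * sin (u $ of_nat k)) *\<^sub>R oconj (ev k)) = Phi k x *\<^sub>R oconj (ev k)"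
      unfolding Phi_def by (intro integral_scaleR_left_hk E1_int) simp
  qed
  finally show ?thesis by (simp add: scaleR_sum_right)
qed

lemma dotp_add: "dotp u (x + y) = dotp u x + dotp u y"
  by (simp add: dotp_def algebra_simps sum.distrib)
lemma dotp_diff: "dotp u (x - y) = dotp u x - dotp u y"
  by (simp add: dotp_def algebra_simps sum_subtractf)
lemma dotp_ev: "l < 8 \<Longrightarrow> dotp u (ev l) = u $ of_nat l"
  by (simp add: dotp_def ev_nth if_distrib[of "\<lambda>t. _ * t"] cong: if_cong)
lemma dotp_inner: "dotp u w = inner u w"
  using sum8[of "\<lambda>i. u $ i * w $ i"] by (simp add: dotp_def inner_vec_def)

lemma pw_id: "l < 8 \<Longrightarrow> sin (dotp u (w + ev l)) / Sf u * sin (u $ of_nat k) - sin (dotp u (w - ev l)) / Sf u * sin (u $ of_nat k)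
   = 2 * cos (dotp u w) * (sin (u $ of_nat l) * sin (u $ of_nat k)) / Sf u"
  by (cases "Sf u = 0") (simp_all add: dotp_add dotp_diff dotp_ev sin_add sin_diff field_simps)

definition Psi :: "real^8 \<Rightarrow> nat \<Rightarrow> nat \<Rightarrow> real" where
  "Psi w k l = integral cube (\<lambda>u. 2 * cos (dotp u w) * (sin (u $ of_nat l) * sin (u $ of_nat k)) / Sf u)"

lemma Psi_sym: "Psi w k l = Psi w l k"
  unfolding Psi_def by (simp add: mult.commute)

lemma Phi_diff:
  assumes "k < 8" "l < 8"
  shows "Phi k (w + ev l) - Phi k (w - ev l) = Psi w k l"
proof -
  have "Phi k (w + ev l) - Phi k (w - ev l) = integral cube (\<lambda>u. sin (dotp u (w + ev l)) / Sf u * sin (u $ of_nat k) - sin (dotp u (w - ev l)) / Sf u * sin (u $ of_nat k))"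
    unfolding Phi_def by (rule integral_diff[symmetric]) (auto intro!: E1_int E1_int' assms)
  also have "\<dots> = Psi w k l" unfolding Psi_def
    by (rule integral_cong) (rule pw_id[OF assms(2)])
  finally show ?thesis .
qed

lemma Psi_int: "k < 8 \<Longrightarrow> l < 8 \<Longrightarrow> (\<lambda>u. 2 * cos (dotp u w) * (sin (u $ of_nat l) * sin (u $ of_nat k)) / Sf u) integrable_on cube"
proof -
  assume k: "k < 8" and l: "l < 8"
  have eq: "(\<lambda>u. 2 * cos (dotp u w) * (sin (u $ of_nat l) * sin (u $ of_nat k)) / Sf u)
     = (\<lambda>u. sin (dotp u (w + ev l)) / Sf u * sin (u $ of_nat k) - sin (dotp u (w - ev l)) / Sf u * sin (u $ of_nat k))"
    by (rule ext) (rule pw_id[OF l, symmetric])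
  show ?thesis unfolding eq by (intro integrable_diff E1_int k)
qed


lemma negl_sin0: "negligible {u::real^8. sin (u $ 0) = 0}"
proof -
  have m: "{u::real^8. sin (u $ 0) = 0} \<in> sets lborel" by measurable
  have "{u::real^8. sin (u $ 0) = 0} \<in> null_sets lborel" using m null_sin[of 0] by (simp add: null_sets_def)
  then have "{u::real^8. sin (u $ 0) = 0} \<in> null_sets lebesgue" by (rule null_sets_completionI)
  then show ?thesis by (simp add: negligible_iff_null_sets)
qed

lemma Psi_trace:
  assumes w: "\<forall>i. w $ i \<in> \<int>"
  shows "(\<Sum>k<8. Psi w k k) = (if w = 0 then 2 * (2 * pi) ^ 8 else 0)"
proof -
  have "(\<Sum>k<8. Psi w k k) = integral cube (\<lambda>u. \<Sum>k<8. 2 * cos (dotp u w) * (sin (u $ of_nat k) * sin (u $ of_nat k)) / Sf u)"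
    unfolding Psi_def by (rule integral_sum[symmetric]) (auto intro: Psi_int)
  also have "\<dots> = integral cube (\<lambda>u. 2 * cos (dotp u w))"
  proof (rule integral_spike[OF negl_sin0])
    fix u assume u: "u \<in> cube - {u::real^8. sin (u $ 0) = 0}"
    have "(sin (u $ of_nat 0))\<^sup>2 \<le> Sf u"
      unfolding Sf_def by (rule member_le_sum) auto
    moreover have "(sin (u $ of_nat 0))\<^sup>2 > 0" using u by simp
    ultimately have "Sf u \<noteq> 0" by linarith
    have e1: "(\<Sum>k<8. 2 * cos (dotp u w) * (sin (u $ of_nat k) * sin (u $ of_nat k)) / Sf u)
        = 2 * cos (dotp u w) * (\<Sum>k<8. sin (u $ of_nat k) * sin (u $ of_nat k)) / Sf u"
      by (simp add: sum_divide_distrib sum_distrib_left)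
    have e2: "(\<Sum>k<8. sin (u $ of_nat k) * sin (u $ of_nat k)) = Sf u"
      by (simp add: Sf_def power2_eq_square)
    show "2 * cos (dotp u w) = (\<Sum>k<8. 2 * cos (dotp u w) * (sin (u $ of_nat k) * sin (u $ of_nat k)) / Sf u)"
      unfolding e1 e2 using \<open>Sf u \<noteq> 0\<close> by simp
  qed
  also have "\<dots> = 2 * integral cube (\<lambda>u. cos (dotp u w))"
  proof -
    have ci: "(\<lambda>u. cos (dotp u w)) integrable_on cube"
      unfolding dotp_inner by (intro integrable_continuous continuous_intros)
    show ?thesis by (rule integral_mult[symmetric, OF ci])
  qed
  also have "\<dots> = (if w = 0 then 2 * (2 * pi) ^ 8 else 0)"
    using cube_cos[OF w] by (simp add: dotp_inner)
  finally show ?thesis .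
qed

lemma sym_sum:
  fixes a :: "nat \<Rightarrow> nat \<Rightarrow> real" and X :: "nat \<Rightarrow> nat \<Rightarrow> octo"
  assumes sym: "\<And>k l. k < 8 \<Longrightarrow> l < 8 \<Longrightarrow> a k l = a l k"
    and XX: "\<And>k l. k < 8 \<Longrightarrow> l < 8 \<Longrightarrow> X k l + X l k = (if k = l then 2 else 0) *\<^sub>R c"
  shows "(\<Sum>k<8. \<Sum>l<8. a k l *\<^sub>R X k l) = (\<Sum>k<8. a k k) *\<^sub>R c"
proof -
  define S where "S = (\<Sum>k<8. \<Sum>l<8. a k l *\<^sub>R X k l)"
  have S2: "S = (\<Sum>k<8. \<Sum>l<8. a k l *\<^sub>R X l k)"
    unfolding S_def by (subst sum.swap) (intro sum.cong refl, simp add: sym)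
  have "S + S = (\<Sum>k<8. \<Sum>l<8. a k l *\<^sub>R (X k l + X l k))"
    by (subst (2) S2) (simp add: S_def sum.distrib[symmetric] scaleR_add_right)
  also have "\<dots> = (\<Sum>k<8. \<Sum>l<8. a k l *\<^sub>R (if k = l then 2 else 0) *\<^sub>R c)"
    by (intro sum.cong refl) (simp add: XX)
  also have "\<dots> = (\<Sum>k<8. (2 * a k k) *\<^sub>R c)"
    by (intro sum.cong refl) (simp add: if_distrib[of "\<lambda>t. t *\<^sub>R c"] if_distrib[of "\<lambda>t. _ *\<^sub>R t"] cong: if_cong)
  also have "\<dots> = 2 *\<^sub>R ((\<Sum>k<8. a k k) *\<^sub>R c)"
    by (simp add: scaleR_sum_left[symmetric] sum_distrib_left)
  finally have "S + S = 2 *\<^sub>R ((\<Sum>k<8. a k k) *\<^sub>R c)" .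
  then have "2 *\<^sub>R S = 2 *\<^sub>R ((\<Sum>k<8. a k k) *\<^sub>R c)" by (simp only: scaleR_2)
  then have "S = (\<Sum>k<8. a k k) *\<^sub>R c" by (subst (asm) scaleR_cancel_left) simp
  then show ?thesis unfolding S_def .
qed

lemma E1_diff:
  assumes l: "l < 8"
  shows "E1 (w + ev l) - E1 (w - ev l) = (\<Sum>k<8. (Psi w k l / (2 * pi) ^ 8) *\<^sub>R oconj (ev k))"
proof -
  have "E1 (w + ev l) - E1 (w - ev l) = (\<Sum>k<8. ((Phi k (w + ev l) - Phi k (w - ev l)) / (2 * pi) ^ 8) *\<^sub>R oconj (ev k))"
    unfolding E1_expand by (simp add: sum_subtractf[symmetric] scaleR_diff_left diff_divide_distrib)
  also have "\<dots> = (\<Sum>k<8. (Psi w k l / (2 * pi) ^ 8) *\<^sub>R oconj (ev k))"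
    by (intro sum.cong refl) (simp add: Phi_diff l)
  finally show ?thesis .
qed

lemma E1_relR:
  assumes w: "\<forall>i. w $ i \<in> \<int>"
  shows "(\<Sum>l<8. omult (E1 (w + ev l) - E1 (w - ev l)) (omult (ev l) c)) = (if w = 0 then 2 else 0) *\<^sub>R c"
proof -
  define P8 where "P8 = (2 * pi) ^ 8"
  have P8: "P8 \<noteq> 0" by (simp add: P8_def)
  have "(\<Sum>l<8. omult (E1 (w + ev l) - E1 (w - ev l)) (omult (ev l) c))
      = (\<Sum>l<8. \<Sum>k<8. (Psi w k l / P8) *\<^sub>R omult (oconj (ev k)) (omult (ev l) c))"
    by (intro sum.cong refl) (simp add: E1_diff P8_def omult_sum_left omult_scaleR_left)
  also have "\<dots> = (\<Sum>k<8. \<Sum>l<8. (Psi w k l / P8) *\<^sub>R omult (oconj (ev k)) (omult (ev l) c))"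
    by (rule sum.swap)
  also have "\<dots> = (\<Sum>k<8. Psi w k k / P8) *\<^sub>R c"
    by (rule sym_sum) (simp_all add: Psi_sym oct_id1)
  also have "(\<Sum>k<8. Psi w k k / P8) = (if w = 0 then 2 else 0)"
    using Psi_trace[OF w] P8 by (simp add: sum_divide_distrib[symmetric] P8_def)
  finally show ?thesis .
qed

lemma E1_relL:
  assumes w: "\<forall>i. w $ i \<in> \<int>"
  shows "(\<Sum>k<8. omult (ev k) (omult (E1 (w + ev k) - E1 (w - ev k)) d)) = (if w = 0 then 2 else 0) *\<^sub>R d"
proof -
  define P8 where "P8 = (2 * pi) ^ 8"
  have P8: "P8 \<noteq> 0" by (simp add: P8_def)
  have "(\<Sum>k<8. omult (ev k) (omult (E1 (w + ev k) - E1 (w - ev k)) d))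
      = (\<Sum>k<8. \<Sum>j<8. (Psi w j k / P8) *\<^sub>R omult (ev k) (omult (oconj (ev j)) d))"
    by (intro sum.cong refl) (simp add: E1_diff P8_def omult_sum_left omult_scaleR_left omult_sum_right omult_scaleR_right)
  also have "\<dots> = (\<Sum>k<8. Psi w k k / P8) *\<^sub>R d"
    by (rule sym_sum) (simp_all add: Psi_sym oct_id2)
  also have "(\<Sum>k<8. Psi w k k / P8) = (if w = 0 then 2 else 0)"
    using Psi_trace[OF w] P8 by (simp add: sum_divide_distrib[symmetric] P8_def)
  finally show ?thesis .
qed


lemma lattice_scale_int:
  assumes h: "h > 0" and z: "z \<in> lattice h"
  shows "\<forall>i. ((1 / h) *\<^sub>R z) $ i \<in> \<int>"
proof
  fix i
  obtain k :: int where "z $ i = h * k" using z unfolding lattice_def by blast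
  then show "((1 / h) *\<^sub>R z) $ i \<in> \<int>" using h by simp
qed

lemma Eh_shift:
  assumes h: "h > 0"
  shows "Eh h (z + h *\<^sub>R ev l) = (1 / h ^ 7) *\<^sub>R E1 ((1 / h) *\<^sub>R z + ev l)"
    and "Eh h (z - h *\<^sub>R ev l) = (1 / h ^ 7) *\<^sub>R E1 ((1 / h) *\<^sub>R z - ev l)"
  using h by (simp_all add: Eh_def scaleR_add_right scaleR_diff_right)

lemma relR_h:
  assumes h: "h > 0"
  shows "relR h"
  unfolding relR_def
proof (intro ballI allI)
  fix z c assume z: "z \<in> lattice h"
  define w where "w = (1 / h) *\<^sub>R z"
  have w: "\<forall>i. w $ i \<in> \<int>" unfolding w_def by (rule lattice_scale_int[OF h z])
  have wz: "(w = 0) = (z = 0)" using h by (auto simp: w_def)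
  have "(\<Sum>l<8. omult (Eh h (z + h *\<^sub>R ev l) - Eh h (z - h *\<^sub>R ev l)) (omult (ev l) c))
      = (1 / h ^ 7) *\<^sub>R (\<Sum>l<8. omult (E1 (w + ev l) - E1 (w - ev l)) (omult (ev l) c))"
    by (simp add: Eh_shift[OF h] w_def scaleR_diff_right[symmetric] omult_scaleR_left scaleR_sum_right)
  also have "\<dots> = (1 / h ^ 7) *\<^sub>R ((if w = 0 then 2 else 0) *\<^sub>R c)"
    by (simp add: E1_relR[OF w])
  also have "\<dots> = (if z = 0 then 2 / h ^ 7 else 0) *\<^sub>R c"
    by (simp add: wz)
  finally show "(\<Sum>l<8. omult (Eh h (z + h *\<^sub>R ev l) - Eh h (z - h *\<^sub>R ev l)) (omult (ev l) c))
                 = (if z = 0 then 2 / h ^ 7 else 0) *\<^sub>R c" .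
qed

lemma relL_h:
  assumes h: "h > 0"
  shows "relL h"
  unfolding relL_def
proof (intro ballI allI)
  fix z d assume z: "z \<in> lattice h"
  define w where "w = (1 / h) *\<^sub>R z"
  have w: "\<forall>i. w $ i \<in> \<int>" unfolding w_def by (rule lattice_scale_int[OF h z])
  have wz: "(w = 0) = (z = 0)" using h by (auto simp: w_def)
  have "(\<Sum>k<8. omult (ev k) (omult (Eh h (z + h *\<^sub>R ev k) - Eh h (z - h *\<^sub>R ev k)) d))
      = (1 / h ^ 7) *\<^sub>R (\<Sum>k<8. omult (ev k) (omult (E1 (w + ev k) - E1 (w - ev k)) d))"
    by (simp add: Eh_shift[OF h] w_def scaleR_diff_right[symmetric] omult_scaleR_left omult_scaleR_right scaleR_sum_right)
  also have "\<dots> = (1 / h ^ 7) *\<^sub>R ((if w = 0 then 2 else 0) *\<^sub>R d)"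
    by (simp add: E1_relL[OF w])
  also have "\<dots> = (if z = 0 then 2 / h ^ 7 else 0) *\<^sub>R d"
    by (simp add: wz)
  finally show "(\<Sum>k<8. omult (ev k) (omult (Eh h (z + h *\<^sub>R ev k) - Eh h (z - h *\<^sub>R ev k)) d))
                 = (if z = 0 then 2 / h ^ 7 else 0) *\<^sub>R d" .
qed

theorem mainTheorem14:
  fixes h :: real and B :: "(real ^ 8) set"
  assumes "h > 0" and "B \<subseteq> lattice h" and "bounded B"
  shows "\<forall>g :: real ^ 8 \<Rightarrow> octo. \<forall>y\<in>dbound h B.
           Pop h B (Pop h B g) y = Pop h B g y
         \<and> Qop h B (Qop h B g) y = Qop h B g y
         \<and> Pop h B (Qop h B g) y = 0
         \<and> Qop h B (Pop h B g) y = 0"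
  by (rule main_alg[OF assms(1) assms(2) assms(3) relR_h[OF assms(1)] relL_h[OF assms(1)]])

end
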